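(* Let $q\ge2$ and let $U$ be a $q\times q$ row-stochastic matrix with strictly positive entries. There is a constant $C_4'$, independent of $n$, $M$, $a$ and the input distribution, such that for all sufficiently large $n$, every integer $M\ge2$, every integer $a\in[1:n]$, every distribution $Q_{\mathrm{ip}}$ on $\mathcal{N}_{q,n}$, every choice of representatives $\tilde{\mathbf{t}}_{\mathbf{l}}\in C_{\mathbf{l}}$ ($\mathbf{l}\in V$) and every Gray-like ordering $g$ of $V$, the output $\hat Q_{\mathrm{ip}}$ of the quantization procedure described in the context is an $M$-type distribution on $\mathcal{N}_{q,n}$ (a probability distribution all of whose values are integer multiples of $1/M$), and the corresponding output distributions $Q_{\mathrm{op}}(\mathbf{w})=\sum_{\mathbf{t}}Q_{\mathrm{ip}}(\mathbf{t})P_{q\text{-NC}}(\mathbf{w}|\mathbf{t})$ and $\hat Q_{\mathrm{op}}(\mathbf{w})=\sum_{\mathbf{t}}\hat Q_{\mathrm{ip}}(\mathbf{t})P_{q\text{-NC}}(\mathbf{w}|\mathbf{t})$ satisfy $$d_{\mathrm{TV}}(Q_{\mathrm{op}},\hat Q_{\mathrm{op}})\le \frac{C_4' a(\log n)^{(q-2)/2}}{\sqrt n}+\left(\frac{2n}{a}\right)^{q-1}\frac{C_4'(\log n)^{(q-2)/2}}{\sqrt n}\cdot\frac{a}{M}.$$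
   Context: Notation: $\mathcal{N}_{q,n}=\{\mathbf{t}\in\mathbb{Z}_{\ge0}^q:\sum_i t_i=n\}$ is the set of compositions of vectors in $[1:q]^n$ (the composition of $\mathbf{x}$ is $(N(1|\mathbf{x}),\dots,N(q|\mathbf{x}))$, $N(c|\mathbf{x})=|\{i:x_i=c\}|$). The $q$-ary noisy composition channel $q$-NCC$_{n,U}$ has input and output alphabet $\mathcal{N}_{q,n}$ and transition probability $P_{q\text{-NC}}(\mathbf{w}|\mathbf{t})=\sum_{\mathbf{z}\in[1:q]^n:\,\text{composition of }\mathbf{z}=\mathbf{w}}\prod_{i=1}^nU(z_i|x_i)$, where $\mathbf{x}$ is any vector of composition $\mathbf{t}$. $d_{\mathrm{TV}}(P,Q)=\frac12\sum|P-Q|$. Logarithms base 2. $\lfloor x\rfloor_{1/M}=\lfloor Mx\rfloor/M$. Cells: let $\nu=\lceil (n+1)/a\rceil$; for $\mathbf{l}\in[1:\nu]^{q-1}$ let $C_{\mathbf{l}}=\{\mathbf{t}\in\mathcal{N}_{q,n}:(l_i-1)a\le t_i\le l_ia-1\ \forall i\in[1:q-1]\}$, and let $V=\{\mathbf{l}:C_{\mathbf{l}}\ne\emptyset\}$. Two distinct $\mathbf{l},\mathbf{l}'\in V$ are adjacent if either they differ in exactly one coordinate, by exactly $1$, or they differ in exactly two coordinates $k,j$ with $l_k=l'_k+1$ and $l_j=l'_j-1$. A Gray-like ordering of $V$ is a bijection $g:[1:|V|]\to V$ with $g(j),g(j+1)$ adjacent for all $j\in[1:|V|-1]$. Quantization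 procedure. Stage I: for each $\mathbf{l}\in V$ and $\mathbf{t}\in C_{\mathbf{l}}\setminus\{\tilde{\mathbf{t}}_{\mathbf{l}}\}$ set $Q^{(a)}(\mathbf{t})=\lfloor Q_{\mathrm{ip}}(\mathbf{t})\rfloor_{1/M}$, and set $Q^{(a)}(\tilde{\mathbf{t}}_{\mathbf{l}})=\lfloor Q_{\mathrm{ip}}(\tilde{\mathbf{t}}_{\mathbf{l}})\rfloor_{1/M}+\sum_{\mathbf{t}\in C_{\mathbf{l}}}\big(Q_{\mathrm{ip}}(\mathbf{t})-\lfloor Q_{\mathrm{ip}}(\mathbf{t})\rfloor_{1/M}\big)$. Stage II: set $R_1=Q^{(a)}(\tilde{\mathbf{t}}_{g(1)})$; for $i=1,\dots,|V|-1$ set $\hat Q_{\mathrm{ip}}(\tilde{\mathbf{t}}_{g(i)})=\lfloor R_i\rfloor_{1/M}$ and $R_{i+1}=Q^{(a)}(\tilde{\mathbf{t}}_{g(i+1)})+R_i-\lfloor R_i\rfloor_{1/M}$; set $\hat Q_{\mathrm{ip}}(\tilde{\mathbf{t}}_{g(|V|)})=R_{|V|}$; and set $\hat Q_{\mathrm{ip}}(\mathbf{t})=Q^{(a)}(\mathbf{t})$ for every $\mathbf{t}$ that is not a representative. *)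

theory Defs
  imports Complex_Main "HOL-Library.FuncSet"
begin

definition vecs :: "nat \<Rightarrow> nat \<Rightarrow> (nat \<Rightarrow> nat) set" where
  "vecs q n = PiE {1..n} (\<lambda>_. {1..q})"

definition comp :: "nat \<Rightarrow> nat \<Rightarrow> (nat \<Rightarrow> nat) \<Rightarrow> (nat \<Rightarrow> nat)" where
  "comp q n x = (\<lambda>c. if c \<in> {1..q} then card {i \<in> {1..n}. x i = c} else 0)"

definition comps :: "nat \<Rightarrow> nat \<Rightarrow> (nat \<Rightarrow> nat) set" where
  "comps q n = {t. (\<forall>c. c \<notin> {1..q} \<longrightarrow> t c = 0) \<and> (\<Sum>c\<in>{1..q}. t c) = n}"

text \<open>Transition probability of q-NCC_{n,U}; U y x denotes U(y|x).
  x is any vector of composition t (the value does not depend on the choice).\<close>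
definition ncc :: "nat \<Rightarrow> nat \<Rightarrow> (nat \<Rightarrow> nat \<Rightarrow> real) \<Rightarrow> (nat \<Rightarrow> nat) \<Rightarrow> (nat \<Rightarrow> nat) \<Rightarrow> real" where
  "ncc q n U w t =
     (let x = (SOME x. x \<in> vecs q n \<and> comp q n x = t)
      in \<Sum>z\<in>{z \<in> vecs q n. comp q n z = w}. \<Prod>i\<in>{1..n}. U (z i) (x i))"

definition flr :: "nat \<Rightarrow> real \<Rightarrow> real" where
  "flr M x = real_of_int \<lfloor>real M * x\<rfloor> / real M"

definition nu :: "nat \<Rightarrow> nat \<Rightarrow> nat" where
  "nu n a = nat \<lceil>real (n + 1) / real a\<rceil>"

definition cell :: "nat \<Rightarrow> nat \<Rightarrow> nat \<Rightarrow> (nat \<Rightarrow> nat) \<Rightarrow> (nat \<Rightarrow> nat) set" where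
  "cell q n a l = {t \<in> comps q n. \<forall>i\<in>{1..q-1}.
      (int (l i) - 1) * int a \<le> int (t i) \<and> int (t i) \<le> int (l i) * int a - 1}"

definition cellidx :: "nat \<Rightarrow> nat \<Rightarrow> nat \<Rightarrow> (nat \<Rightarrow> nat) set" where
  "cellidx q n a = PiE {1..q-1} (\<lambda>_. {1..nu n a})"

definition Vset :: "nat \<Rightarrow> nat \<Rightarrow> nat \<Rightarrow> (nat \<Rightarrow> nat) set" where
  "Vset q n a = {l \<in> cellidx q n a. cell q n a l \<noteq> {}}"

definition adjacent :: "nat \<Rightarrow> (nat \<Rightarrow> nat) \<Rightarrow> (nat \<Rightarrow> nat) \<Rightarrow> bool" where
  "adjacent q l l' \<longleftrightarrow> l \<noteq> l' \<and>
     ((\<exists>k\<in>{1..q-1}. (l k = l' k + 1 \<or> l' k = l k + 1) \<and>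
          (\<forall>j\<in>{1..q-1}. j \<noteq> k \<longrightarrow> l j = l' j)) \<or>
      (\<exists>k\<in>{1..q-1}. \<exists>j\<in>{1..q-1}. k \<noteq> j \<and> l k = l' k + 1 \<and> l j + 1 = l' j \<and>
          (\<forall>i\<in>{1..q-1}. i \<noteq> k \<and> i \<noteq> j \<longrightarrow> l i = l' i)))"

definition gray_like :: "nat \<Rightarrow> nat \<Rightarrow> nat \<Rightarrow> (nat \<Rightarrow> (nat \<Rightarrow> nat)) \<Rightarrow> bool" where
  "gray_like q n a g \<longleftrightarrow>
     bij_betw g {1..card (Vset q n a)} (Vset q n a) \<and>
     (\<forall>j\<in>{1..<card (Vset q n a)}. adjacent q (g j) (g (Suc j)))"

text \<open>Stage I. Since cells are disjoint, the representatives are distinct, so the inner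
  sum over l with rep l = t has at most one term.\<close>
definition stageI :: "nat \<Rightarrow> nat \<Rightarrow> nat \<Rightarrow> nat \<Rightarrow> ((nat \<Rightarrow> nat) \<Rightarrow> real)
     \<Rightarrow> ((nat \<Rightarrow> nat) \<Rightarrow> (nat \<Rightarrow> nat)) \<Rightarrow> (nat \<Rightarrow> nat) \<Rightarrow> real" where
  "stageI q n a M Qip rep t = flr M (Qip t) +
     (\<Sum>l\<in>{l \<in> Vset q n a. rep l = t}. \<Sum>t'\<in>cell q n a l. (Qip t' - flr M (Qip t')))"

text \<open>Stage II: Racc Qa M rep g k = R_{k+1}.\<close>
primrec Racc :: "((nat \<Rightarrow> nat) \<Rightarrow> real) \<Rightarrow> nat \<Rightarrow> ((nat \<Rightarrow> nat) \<Rightarrow> (nat \<Rightarrow> nat))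
     \<Rightarrow> (nat \<Rightarrow> (nat \<Rightarrow> nat)) \<Rightarrow> nat \<Rightarrow> real" where
  "Racc Qa M rep g 0 = Qa (rep (g 1))"
| "Racc Qa M rep g (Suc k) =
     Qa (rep (g (k + 2))) + Racc Qa M rep g k - flr M (Racc Qa M rep g k)"

definition Rval :: "((nat \<Rightarrow> nat) \<Rightarrow> real) \<Rightarrow> nat \<Rightarrow> ((nat \<Rightarrow> nat) \<Rightarrow> (nat \<Rightarrow> nat))
     \<Rightarrow> (nat \<Rightarrow> (nat \<Rightarrow> nat)) \<Rightarrow> nat \<Rightarrow> real" where
  "Rval Qa M rep g i = Racc Qa M rep g (i - 1)"

definition quant :: "nat \<Rightarrow> nat \<Rightarrow> nat \<Rightarrow> nat \<Rightarrow> ((nat \<Rightarrow> nat) \<Rightarrow> real)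
     \<Rightarrow> ((nat \<Rightarrow> nat) \<Rightarrow> (nat \<Rightarrow> nat)) \<Rightarrow> (nat \<Rightarrow> (nat \<Rightarrow> nat)) \<Rightarrow> (nat \<Rightarrow> nat) \<Rightarrow> real" where
  "quant q n a M Qip rep g t =
     (let Qa = stageI q n a M Qip rep; N = card (Vset q n a) in
      if \<exists>i\<in>{1..N}. rep (g i) = t then
        (let i = (THE i. i \<in> {1..N} \<and> rep (g i) = t) in
         if i < N then flr M (Rval Qa M rep g i) else Rval Qa M rep g i)
      else Qa t)"

definition is_dist :: "nat \<Rightarrow> nat \<Rightarrow> ((nat \<Rightarrow> nat) \<Rightarrow> real) \<Rightarrow> bool" where
  "is_dist q n P \<longleftrightarrow> (\<forall>t\<in>comps q n. P t \<ge> 0) \<and> (\<Sum>t\<in>comps q n. P t) = 1"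

definition M_type :: "nat \<Rightarrow> nat \<Rightarrow> nat \<Rightarrow> ((nat \<Rightarrow> nat) \<Rightarrow> real) \<Rightarrow> bool" where
  "M_type q n M P \<longleftrightarrow> is_dist q n P \<and>
     (\<forall>t\<in>comps q n. \<exists>k::int. P t = real_of_int k / real M)"

definition out_dist :: "nat \<Rightarrow> nat \<Rightarrow> (nat \<Rightarrow> nat \<Rightarrow> real) \<Rightarrow> ((nat \<Rightarrow> nat) \<Rightarrow> real)
     \<Rightarrow> (nat \<Rightarrow> nat) \<Rightarrow> real" where
  "out_dist q n U P w = (\<Sum>t\<in>comps q n. P t * ncc q n U w t)"

definition dTV :: "nat \<Rightarrow> nat \<Rightarrow> ((nat \<Rightarrow> nat) \<Rightarrow> real) \<Rightarrow> ((nat \<Rightarrow> nat) \<Rightarrow> real) \<Rightarrow> real" where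
  "dTV q n P Q = (1/2) * (\<Sum>w\<in>comps q n. \<bar>P w - Q w\<bar>)"

end

theory Submission
  imports Defs "HOL-Library.Function_Algebras"
begin


definition ev :: "nat \<Rightarrow> nat \<Rightarrow> nat" where "ev y = (\<lambda>c. if c = y then 1 else 0)"
definition cnt :: "nat set \<Rightarrow> (nat \<Rightarrow> nat) \<Rightarrow> nat \<Rightarrow> nat" where
  "cnt J z = (\<lambda>c. card {i\<in>J. z i = c})"
definition EE :: "(nat\<Rightarrow>nat\<Rightarrow>real) \<Rightarrow> nat \<Rightarrow> nat set \<Rightarrow> (nat\<Rightarrow>nat) \<Rightarrow> ((nat\<Rightarrow>nat)\<Rightarrow>real) \<Rightarrow> (nat\<Rightarrow>nat) \<Rightarrow> real"
  where "EE U q J x \<Phi> u = (\<Sum>z\<in>PiE J (\<lambda>_. {1..q}). (\<Prod>i\<in>J. U (z i) (x i)) * \<Phi> (u + cnt J z))"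
definition Tw :: "nat \<Rightarrow> (nat \<Rightarrow> real) \<Rightarrow> ((nat\<Rightarrow>nat)\<Rightarrow>real) \<Rightarrow> (nat\<Rightarrow>nat) \<Rightarrow> real" where
  "Tw q W \<Phi> w = (\<Sum>y\<in>{1..q}. W y * \<Phi> (w + ev y))"

lemma EE_empty: "EE U q {} x \<Phi> u = \<Phi> u"
proof -
  have "cnt {} z = 0" for z by (simp add: cnt_def fun_eq_iff)
  then show ?thesis by (simp add: EE_def)
qed

lemma cnt_upd:
  assumes "i \<notin> J" "finite J"
  shows "cnt (insert i J) (g(i := y)) = ev y + cnt J g"
proof
  fix c
  have "{j\<in>insert i J. (g(i:=y)) j = c} = (if y = c then insert i {j\<in>J. g j = c} else {j\<in>J. g j = c})"
    using assms by auto
  moreover have "finite {j\<in>J. g j = c} \<or> True" by simp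
  ultimately show "cnt (insert i J) (g(i := y)) c = (ev y + cnt J g) c"
    using assms by (cases "finite {j\<in>J. g j = c}") (auto simp: cnt_def ev_def)
qed

lemma EE_insert:
  assumes "finite J" "i \<notin> J"
  shows "EE U q (insert i J) x \<Phi> u = EE U q J x (Tw q (\<lambda>y. U y (x i)) \<Phi>) u"
proof -
  let ?S = "(\<lambda>_::nat. {1..q::nat})"
  let ?h = "(\<lambda>(y, g). g(i := y))"
  have inj: "inj_on ?h ({1..q} \<times> PiE J ?S)"
    using inj_combinator[of i J ?S] assms by simp
  have "EE U q (insert i J) x \<Phi> u = (\<Sum>z\<in>?h ` ({1..q} \<times> PiE J ?S). (\<Prod>j\<in>insert i J. U (z j) (x j)) * \<Phi> (u + cnt (insert i J) z))"
    unfolding EE_def PiE_insert_eq by simp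
  also have "\<dots> = (\<Sum>(y,g)\<in>{1..q} \<times> PiE J ?S. (\<Prod>j\<in>insert i J. U ((g(i:=y)) j) (x j)) * \<Phi> (u + cnt (insert i J) (g(i:=y))))"
    by (subst sum.reindex[OF inj]) (simp add: case_prod_unfold)
  also have "\<dots> = (\<Sum>(y,g)\<in>{1..q} \<times> PiE J ?S. U y (x i) * ((\<Prod>j\<in>J. U (g j) (x j)) * \<Phi> (u + cnt J g + ev y)))"
  proof (rule sum.cong[OF refl], clarify)
    fix y g assume "y \<in> {1..q}" "g \<in> PiE J ?S"
    have "(\<Prod>j\<in>insert i J. U ((g(i:=y)) j) (x j)) = U y (x i) * (\<Prod>j\<in>J. U ((g(i:=y)) j) (x j))"
      using assms by (simp add: prod.insert)
    also have "(\<Prod>j\<in>J. U ((g(i:=y)) j) (x j)) = (\<Prod>j\<in>J. U (g j) (x j))"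
      using assms by (intro prod.cong) auto
    finally show "(\<Prod>j\<in>insert i J. U ((g(i:=y)) j) (x j)) * \<Phi> (u + cnt (insert i J) (g(i:=y))) =
        U y (x i) * ((\<Prod>j\<in>J. U (g j) (x j)) * \<Phi> (u + cnt J g + ev y))"
      using cnt_upd[OF assms(2) assms(1)] by (simp add: ac_simps)
  qed
  also have "\<dots> = (\<Sum>y\<in>{1..q}. \<Sum>g\<in>PiE J ?S. U y (x i) * ((\<Prod>j\<in>J. U (g j) (x j)) * \<Phi> (u + cnt J g + ev y)))"
    by (simp add: sum.cartesian_product)
  also have "\<dots> = (\<Sum>g\<in>PiE J ?S. \<Sum>y\<in>{1..q}. U y (x i) * ((\<Prod>j\<in>J. U (g j) (x j)) * \<Phi> (u + cnt J g + ev y)))"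
    by (rule sum.swap)
  also have "\<dots> = EE U q J x (Tw q (\<lambda>y. U y (x i)) \<Phi>) u"
    unfolding EE_def Tw_def by (simp add: sum_distrib_left ac_simps)
  finally show ?thesis .
qed

lemma EE_lin:
  "EE U q J x (\<lambda>w. a * \<Phi> w + b * \<Psi> w) u = a * EE U q J x \<Phi> u + b * EE U q J x \<Psi> u"
  unfolding EE_def by (simp add: sum.distrib sum_distrib_left algebra_simps)

lemma EE_sum:
  "EE U q J x (\<lambda>w. \<Sum>y\<in>Y. F y w) u = (\<Sum>y\<in>Y. EE U q J x (F y) u)"
  unfolding EE_def by (simp add: sum_distrib_left sum.swap[of _ Y])

lemma EE_cmult:
  "EE U q J x (\<lambda>w. a * \<Phi> w) u = a * EE U q J x \<Phi> u"
  unfolding EE_def by (simp add: sum_distrib_left algebra_simps)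

lemma EE_shift:
  "EE U q J x (\<lambda>w. \<Phi> (w + v)) u = EE U q J x \<Phi> (u + v)"
  unfolding EE_def by (simp add: ac_simps)

lemma EE_cong_x:
  assumes "\<And>i. i \<in> J \<Longrightarrow> x i = x' i"
  shows "EE U q J x \<Phi> u = EE U q J x' \<Phi> u"
  unfolding EE_def using assms by (intro sum.cong refl arg_cong2[where f="(*)"] prod.cong) auto


lemma card_ins_cnt:
  assumes "finite J" "i \<notin> J"
  shows "card {j\<in>insert i J. x j = c} = card {j\<in>J. x j = c} + (if x i = c then 1 else 0)"
proof -
  have "{j\<in>insert i J. x j = c} = (if x i = c then insert i {j\<in>J. x j = c} else {j\<in>J. x j = c})"
    by auto
  then show ?thesis using assms by auto
qed

lemma EE_perm:
  assumes "finite J"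
  shows "finite J' \<Longrightarrow> (\<And>c. card {i\<in>J. x i = c} = card {i\<in>J'. x' i = c}) \<Longrightarrow>
    EE U q J x \<Phi> u = EE U q J' x' \<Phi> u"
  using assms
proof (induction J arbitrary: J' \<Phi> rule: finite_induct)
  case empty
  have "J' = {}"
  proof (rule ccontr)
    assume "J' \<noteq> {}"
    then obtain i where i: "i \<in> J'" by auto
    have "card {j\<in>J'. x' j = x' i} > 0"
      using i empty.prems(1) by (subst card_gt_0_iff) auto
    then show False using empty.prems(2)[of "x' i"] by simp
  qed
  then show ?case by (simp add: EE_empty)
next
  case (insert i J1)
  let ?c0 = "x i"
  have "card {j\<in>insert i J1. x j = ?c0} > 0"
    using insert.hyps by (subst card_gt_0_iff) auto
  then have "card {j\<in>J'. x' j = ?c0} > 0" using insert.prems(2) by simp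
  then have "{j\<in>J'. x' j = ?c0} \<noteq> {}" by (metis card.empty less_irrefl)
  then obtain i' where i': "i' \<in> J'" "x' i' = ?c0" by blast
  define J1' where "J1' = J' - {i'}"
  have J': "J' = insert i' J1'" "i' \<notin> J1'" "finite J1'"
    using i' insert.prems(1) by (auto simp: J1'_def)
  have cnts: "card {j\<in>J1. x j = c} = card {j\<in>J1'. x' j = c}" for c
    using insert.prems(2)[of c] card_ins_cnt[OF insert.hyps(1,2), of x c]
      card_ins_cnt[OF J'(3) J'(2), of x' c] i'(2) J'(1) by simp
  have "EE U q (insert i J1) x \<Phi> u = EE U q J1 x (Tw q (\<lambda>y. U y (x i)) \<Phi>) u"
    by (rule EE_insert[OF insert.hyps(1,2)])
  also have "\<dots> = EE U q J1' x' (Tw q (\<lambda>y. U y (x i)) \<Phi>) u"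
    by (rule insert.IH[OF J'(3) cnts])
  also have "\<dots> = EE U q J' x' \<Phi> u"
    using EE_insert[OF J'(3) J'(2)] i'(2) J'(1) by simp
  finally show ?case .
qed


definition BS :: "real \<Rightarrow> nat \<Rightarrow> (nat \<Rightarrow> real) \<Rightarrow> real" where
  "BS p m f = (\<Sum>k\<le>m. real (m choose k) * p ^ k * (1 - p) ^ (m - k) * f k)"

lemma BS_cong: "(\<And>k. k \<le> m \<Longrightarrow> f k = g k) \<Longrightarrow> BS p m f = BS p m g"
  unfolding BS_def by (intro sum.cong) auto

lemma BS_Suc: "BS p (Suc m) f = p * BS p m (\<lambda>k. f (Suc k)) + (1 - p) * BS p m f"
proof -
  have "BS p (Suc m) f = (1 - p) ^ Suc m * f 0 +
      (\<Sum>k\<le>m. real (Suc m choose Suc k) * p ^ Suc k * (1 - p) ^ (m - k) * f (Suc k))"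
    unfolding BS_def by (subst sum.atMost_Suc_shift) simp
  also have "(\<Sum>k\<le>m. real (Suc m choose Suc k) * p ^ Suc k * (1 - p) ^ (m - k) * f (Suc k)) =
      (\<Sum>k\<le>m. real (m choose k) * p ^ Suc k * (1 - p) ^ (m - k) * f (Suc k)) +
      (\<Sum>k\<le>m. real (m choose Suc k) * p ^ Suc k * (1 - p) ^ (m - k) * f (Suc k))"
    by (simp add: sum.distrib algebra_simps)
  also have "(\<Sum>k\<le>m. real (m choose k) * p ^ Suc k * (1 - p) ^ (m - k) * f (Suc k)) = p * BS p m (\<lambda>k. f (Suc k))"
    unfolding BS_def by (simp add: sum_distrib_left algebra_simps)
  also have "(1 - p) ^ Suc m * f 0 + (\<Sum>k\<le>m. real (m choose Suc k) * p ^ Suc k * (1 - p) ^ (m - k) * f (Suc k))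
      = (1 - p) * BS p m f"
  proof -
    have "BS p m f = (1 - p) ^ m * f 0 + (\<Sum>k<m. real (m choose Suc k) * p ^ Suc k * (1 - p) ^ (m - Suc k) * f (Suc k))"
      unfolding BS_def by (subst sum.atMost_shift) simp
    moreover have "(\<Sum>k\<le>m. real (m choose Suc k) * p ^ Suc k * (1 - p) ^ (m - k) * f (Suc k)) =
        (\<Sum>k<m. real (m choose Suc k) * p ^ Suc k * (1 - p) ^ (m - k) * f (Suc k))"
      by (simp add: lessThan_Suc_atMost[symmetric])
    moreover have "(\<Sum>k<m. real (m choose Suc k) * p ^ Suc k * (1 - p) ^ (m - k) * f (Suc k)) =
        (1 - p) * (\<Sum>k<m. real (m choose Suc k) * p ^ Suc k * (1 - p) ^ (m - Suc k) * f (Suc k))"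
      unfolding sum_distrib_left
    proof (intro sum.cong refl)
      fix k assume "k \<in> {..<m}"
      then have "m - k = Suc (m - Suc k)" by auto
      then have "(1 - p) ^ (m - k) = (1 - p) * (1 - p) ^ (m - Suc k)" by simp
      then show "real (m choose Suc k) * p ^ Suc k * (1 - p) ^ (m - k) * f (Suc k) =
        (1 - p) * (real (m choose Suc k) * p ^ Suc k * (1 - p) ^ (m - Suc k) * f (Suc k))"
        by (simp only: mult_ac)
    qed
    ultimately show ?thesis by (simp add: algebra_simps)
  qed
  ultimately show ?thesis by (simp add: algebra_simps)
qed

lemma BS_one: "BS p m (\<lambda>_. 1) = 1"
  by (induction m) (simp_all add: BS_Suc, simp add: BS_def)

lemma BS_mono:
  assumes "0 \<le> p" "p \<le> 1" "\<And>k. k \<le> m \<Longrightarrow> f k \<le> g k"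
  shows "BS p m f \<le> BS p m g"
  unfolding BS_def using assms by (intro sum_mono mult_left_mono) auto

lemma BS_lin: "BS p m (\<lambda>k. a * f k + b * g k) = a * BS p m f + b * BS p m g"
  unfolding BS_def by (simp add: sum.distrib sum_distrib_left algebra_simps)


declare plus_fun_apply[simp del]

definition vs :: "nat \<Rightarrow> nat \<Rightarrow> nat \<Rightarrow> nat" where "vs s y = (\<lambda>c. if c = y then s else 0)"
definition Sm :: "nat \<Rightarrow> nat \<Rightarrow> ((nat\<Rightarrow>nat)\<Rightarrow>real) \<Rightarrow> (nat\<Rightarrow>nat) \<Rightarrow> real" where
  "Sm c d \<Phi> w = (\<Phi> (w + ev c) + \<Phi> (w + ev d)) / 2"

lemma vs_Suc: "vs (Suc s) y = ev y + vs s y"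
  by (simp add: fun_eq_iff vs_def ev_def plus_fun_apply)

lemma vs_0: "vs 0 y = 0"
  by (simp add: fun_eq_iff vs_def)

lemma BS_0: "BS p 0 f = f 0"
  by (simp add: BS_def)

lemma Sop_explicit: "((Sm c d) ^^ L) \<Phi> u = BS (1/2) L (\<lambda>s. \<Phi> (u + vs s c + vs (L - s) d))"
proof (induction L arbitrary: u)
  case 0
  have "u + vs 0 c + vs (0 - 0) d = u" by (simp add: vs_0)
  then show ?case by (simp add: BS_0)
next
  case (Suc L)
  have "((Sm c d) ^^ Suc L) \<Phi> u = (((Sm c d) ^^ L) \<Phi> (u + ev c) + ((Sm c d) ^^ L) \<Phi> (u + ev d)) / 2"
    by (simp add: Sm_def)
  also have "\<dots> = (BS (1/2) L (\<lambda>s. \<Phi> (u + ev c + vs s c + vs (L - s) d)) +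
      BS (1/2) L (\<lambda>s. \<Phi> (u + ev d + vs s c + vs (L - s) d))) / 2"
    by (simp only: Suc.IH)
  also have "BS (1/2) L (\<lambda>s. \<Phi> (u + ev c + vs s c + vs (L - s) d)) =
      BS (1/2) L (\<lambda>s. \<Phi> (u + vs (Suc s) c + vs (Suc L - Suc s) d))"
    by (intro BS_cong) (simp add: vs_Suc add_ac)
  also have "BS (1/2) L (\<lambda>s. \<Phi> (u + ev d + vs s c + vs (L - s) d)) =
      BS (1/2) L (\<lambda>s. \<Phi> (u + vs s c + vs (Suc L - s) d))"
    by (intro BS_cong) (simp add: vs_Suc add_ac Suc_diff_le)
  finally show ?case by (simp add: BS_Suc)
qed

lemma BS_half: "BS (1/2) L g = (\<Sum>s\<le>L. real (L choose s) * g s) / 2 ^ L"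
proof -
  have "(1/2::real) ^ s * (1 - 1/2) ^ (L - s) = 1 / 2 ^ L" if "s \<le> L" for s
  proof -
    have "(1/2::real) ^ s * (1/2) ^ (L - s) = (1/2) ^ (s + (L - s))" by (simp add: power_add)
    then show ?thesis using that by (simp add: power_one_over)
  qed
  then show ?thesis unfolding BS_def
    by (simp add: sum_divide_distrib) (intro sum.cong refl, simp add: field_simps)
qed

lemma binom_tv:
  fixes L :: nat
  defines "a \<equiv> (\<lambda>r. if r = 0 then 0 else real (L choose (r - 1)))"
  defines "b \<equiv> (\<lambda>r. real (L choose r))"
  shows "(\<Sum>r\<le>Suc L. \<bar>a r - b r\<bar>) = 2 * real (L choose (L div 2))"
proof -
  let ?h = "L div 2"
  have tele: "(\<Sum>r\<le>k. b r - a r) = real (L choose k)" for k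
    by (induction k) (simp_all add: a_def b_def)
  have s1: "a r \<le> b r" if "r \<le> ?h" for r
  proof (cases "r = 0")
    case False
    then have "L choose (r - 1) \<le> L choose r" using that by (intro binomial_mono) auto
    then show ?thesis using False by (simp add: a_def b_def)
  qed (simp add: a_def b_def)
  have s2: "b r \<le> a r" if "?h < r" "r \<le> Suc L" for r
  proof (cases "r = Suc L")
    case True
    then show ?thesis using that by (simp add: a_def b_def binomial_eq_0)
  next
    case False
    then have "L choose r \<le> L choose (r - 1)" using that by (intro binomial_antimono) auto
    then show ?thesis using that by (simp add: a_def b_def)
  qed
  have sub: "{..?h} \<subseteq> {..Suc L}" by auto
  have "(\<Sum>r\<le>Suc L. \<bar>a r - b r\<bar>) = (\<Sum>r\<in>{..Suc L} - {..?h}. \<bar>a r - b r\<bar>) + (\<Sum>r\<le>?h. \<bar>a r - b r\<bar>)"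
    by (rule sum.subset_diff[OF sub]) simp
  also have "(\<Sum>r\<le>?h. \<bar>a r - b r\<bar>) = (\<Sum>r\<le>?h. b r - a r)"
    using s1 by (intro sum.cong) auto
  also have "(\<Sum>r\<in>{..Suc L} - {..?h}. \<bar>a r - b r\<bar>) = (\<Sum>r\<in>{..Suc L} - {..?h}. -(b r - a r))"
    using s2 by (intro sum.cong) auto
  also have "\<dots> = - (\<Sum>r\<in>{..Suc L} - {..?h}. (b r - a r))" by (simp only: sum_negf)
  also have "\<dots> = - ((\<Sum>r\<le>Suc L. b r - a r) - (\<Sum>r\<le>?h. b r - a r))"
    using sum.subset_diff[OF sub, of "\<lambda>r. b r - a r"] by simp
  finally show ?thesis using tele[of "Suc L"] tele[of ?h] by (simp add: binomial_eq_0)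
qed

lemma G1: fixes K A C0 C1 C2 :: real
  assumes K: "K \<ge> 0" and A: "A > 0" and e1: "(K+1)*C1 = (2*K+1)*C0" and e2: "C2 = 2*C1"
    and h: "(C0/A)^2*(K+1) \<le> 1"
  shows "(C2/(4*A))^2*(K+2) \<le> 1"
proof -
  define x where "x = C0/A"
  have K1: "K + 1 \<noteq> 0" "K+1 > 0" using K by auto
  have C1: "C1 = (2*K+1)*C0/(K+1)" using e1 K1 by (simp add: field_split_simps mult.commute)
  have y: "C2/(4*A) = x*(2*K+1)/(2*(K+1))"
    unfolding e2 C1 x_def using K1 A by (simp add: field_split_simps)
  have ab: "D \<noteq> 0 \<Longrightarrow> (x*P/(2*D))^2*Q = (x^2*D)*(P^2*Q/(4*D^3))" for D P Q :: real
    by (simp add: field_split_simps power2_eq_square power3_eq_cube)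
  have "(C2/(4*A))^2*(K+2) = (x^2*(K+1)) * ((2*K+1)^2*(K+2)/(4*(K+1)^3))"
    unfolding y using ab[OF K1(1)] by simp
  also have "\<dots> \<le> 1 * 1"
  proof (rule mult_mono)
    show "x^2*(K+1) \<le> 1" using h by (simp add: x_def)
    have "(2*K+1)^2*(K+2) \<le> 4*(K+1)^3" using K
      by (simp add: power2_eq_square power3_eq_cube algebra_simps)
    then show "(2*K+1)^2*(K+2)/(4*(K+1)^3) \<le> 1" using K1 by (simp add: divide_le_eq_1)
  qed (use K in auto)
  finally show ?thesis by simp
qed

lemma G2: fixes K A C0 C1 :: real
  assumes K: "K \<ge> 0" and A: "A > 0" and e1: "(K+1)*C1 = (2*K+1)*C0"
    and h: "(C0/A)^2*(K+1) \<le> 1"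
  shows "(C1/(2*A))^2*(2*K+2) \<le> 2"
proof -
  define x where "x = C0/A"
  have K1: "K + 1 \<noteq> 0" "K+1 > 0" using K by auto
  have C1: "C1 = (2*K+1)*C0/(K+1)" using e1 K1 by (simp add: field_split_simps mult.commute)
  have y: "C1/(2*A) = x*(2*K+1)/(2*(K+1))"
    unfolding C1 x_def using K1 A by (simp add: field_split_simps)
  have "(C1/(2*A))^2*(2*K+2) = (x^2*(K+1)) * ((2*K+1)^2/(2*(K+1)^2))"
    unfolding y using K1 by (simp add: field_split_simps power2_eq_square)
  also have "\<dots> \<le> 1 * 2"
  proof (rule mult_mono)
    show "x^2*(K+1) \<le> 1" using h by (simp add: x_def)
    have "(2*K+1)^2 \<le> 4*(K+1)^2" using K by (simp add: power2_eq_square algebra_simps)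
    then show "(2*K+1)^2/(2*(K+1)^2) \<le> 2" using K1 by (simp add: field_split_simps)
  qed (use K in auto)
  finally show ?thesis by simp
qed

lemma absorb_real: "(real k + 1) * real ((2*k+1) choose k) = (2 * real k + 1) * real ((2*k) choose k)"
proof -
  have n: "Suc k * ((2*k+1) choose k) = (2*k+1) * ((2*k) choose k)"
    using binomial_absorb_comp[of "2*k+1" k] by (simp add: algebra_simps)
  have "real (Suc k * ((2*k+1) choose k)) = real ((2*k+1) * ((2*k) choose k))" using n by metis
  then show ?thesis by (simp only: of_nat_mult of_nat_Suc of_nat_add of_nat_1 of_nat_numeral) (simp add: algebra_simps)
qed

lemma cb_bound: "(real ((2*k) choose k) / 4 ^ k) ^ 2 * (real k + 1) \<le> 1"
proof (induction k)
  case 0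
  then show ?case by simp
next
  case (Suc k)
  have e2: "(2*k+1) choose (k+1) = (2*k+1) choose k"
    using binomial_symmetric[of k "2*k+1"] by simp
  have e3: "(2*Suc k) choose (Suc k) = 2 * ((2*k+1) choose k)"
    using e2 by (simp add: mult_2)
  have "(real ((2*Suc k) choose (Suc k)) / (4 * 4 ^ k))^2 * (real k + 2) \<le> 1"
    by (rule G1[OF _ _ absorb_real]) (use e3 Suc.IH in auto)
  then show ?case by (simp add: add.commute)
qed

lemma central_bound: "(real (L choose (L div 2)) / 2 ^ L) ^ 2 * (real L + 1) \<le> 2"
proof -
  obtain k where k: "L = 2*k \<or> L = 2*k+1" by (metis dvd_mult_div_cancel oddE odd_two_times_div_two_succ)
  define x where "x = real ((2*k) choose k) / 4 ^ k"
  have xb: "x^2 * (real k+1) \<le> 1" using cb_bound[of k] by (simp add: x_def)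
  have p4: "(2::real)^(2*k) = 4^k" by (simp add: power_mult)
  show ?thesis
  proof (cases "L = 2*k")
    case True
    then have "real (L choose (L div 2)) / 2 ^ L = x" by (simp add: x_def p4)
    then have "(real (L choose (L div 2)) / 2 ^ L) ^ 2 * (real L + 1) = x^2 * (2*real k+1)"
      using True by simp
    also have "\<dots> \<le> 2 * (x^2 * (real k+1))" by (simp add: algebra_simps)
    also have "\<dots> \<le> 2" using xb by simp
    finally show ?thesis .
  next
    case False
    then have L: "L = 2*k+1" using k by simp
    have LL: "L div 2 = k" using L by simp
    have p5: "(2::real) ^ L = 2 * 4 ^ k" using L p4 by simp
    have "(real ((2*k+1) choose k) / (2 * 4^k))^2 * (2*real k+2) \<le> 2"
      by (rule G2[OF _ _ absorb_real]) (use cb_bound[of k] in auto)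
    then show ?thesis unfolding LL p5 using L by (simp add: algebra_simps)
  qed
qed

lemma beta_bound: "2 * real (L choose (L div 2)) / 2 ^ L \<le> 2 * sqrt 2 / sqrt (real L + 1)"
proof -
  define x where "x = real (L choose (L div 2)) / 2 ^ L"
  have x0: "x \<ge> 0" by (simp add: x_def)
  have "x^2 * (real L + 1) \<le> 2" using central_bound[of L] by (simp add: x_def)
  then have "x^2 \<le> 2 / (real L + 1)" by (simp add: field_simps)
  then have "sqrt (x^2) \<le> sqrt (2 / (real L + 1))" by (rule real_sqrt_le_mono)
  then have "x \<le> sqrt 2 / sqrt (real L + 1)" using x0 by (simp add: real_sqrt_divide)
  then show ?thesis by (simp add: x_def)
qed

lemma osc_bound:
  assumes "\<And>w. \<bar>\<Phi> w\<bar> \<le> Bd"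
  shows "\<bar>((Sm c d) ^^ L) \<Phi> (u + ev c) - ((Sm c d) ^^ L) \<Phi> (u + ev d)\<bar> \<le> Bd * (2 * sqrt 2 / sqrt (real L + 1))"
proof -
  define \<psi> where "\<psi> r = \<Phi> (u + vs r c + vs (Suc L - r) d)" for r
  define a where "a r = (if r = 0 then 0 else real (L choose (r - 1)))" for r
  define b where "b r = real (L choose r)" for r
  have Bd0: "Bd \<ge> 0" using assms[of u] by simp
  have 1: "((Sm c d) ^^ L) \<Phi> (u + ev c) = BS (1/2) L (\<lambda>s. \<psi> (Suc s))"
    unfolding Sop_explicit \<psi>_def by (intro BS_cong) (simp add: vs_Suc add_ac)
  have 2: "((Sm c d) ^^ L) \<Phi> (u + ev d) = BS (1/2) L \<psi>"
    unfolding Sop_explicit \<psi>_def by (intro BS_cong) (simp add: vs_Suc add_ac Suc_diff_le)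
  have 3: "(\<Sum>s\<le>L. real (L choose s) * \<psi> (Suc s)) = (\<Sum>r\<le>Suc L. a r * \<psi> r)"
    by (subst sum.atMost_Suc_shift) (simp add: a_def)
  have 4: "(\<Sum>s\<le>L. real (L choose s) * \<psi> s) = (\<Sum>r\<le>Suc L. b r * \<psi> r)"
    by (simp add: b_def binomial_eq_0)
  have "((Sm c d) ^^ L) \<Phi> (u + ev c) - ((Sm c d) ^^ L) \<Phi> (u + ev d) =
      (\<Sum>r\<le>Suc L. (a r - b r) * \<psi> r) / 2 ^ L"
    unfolding 1 2 BS_half 3 4 by (simp add: diff_divide_distrib sum_subtractf left_diff_distrib)
  also have "\<bar>\<dots>\<bar> \<le> (\<Sum>r\<le>Suc L. \<bar>a r - b r\<bar> * Bd) / 2 ^ L"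
  proof -
    have "\<bar>\<Sum>r\<le>Suc L. (a r - b r) * \<psi> r\<bar> \<le> (\<Sum>r\<le>Suc L. \<bar>(a r - b r) * \<psi> r\<bar>)" by (rule sum_abs)
    also have "\<dots> \<le> (\<Sum>r\<le>Suc L. \<bar>a r - b r\<bar> * Bd)"
      by (intro sum_mono) (simp add: abs_mult \<psi>_def assms mult_left_mono)
    finally show ?thesis by (simp add: divide_right_mono)
  qed
  also have "\<dots> = Bd * (2 * real (L choose (L div 2)) / 2 ^ L)"
  proof -
    have "(\<Sum>r\<le>Suc L. \<bar>a r - b r\<bar>) = 2 * real (L choose (L div 2))"
      unfolding a_def b_def by (rule binom_tv)
    moreover have "(\<Sum>r\<le>Suc L. \<bar>a r - b r\<bar> * Bd) = (\<Sum>r\<le>Suc L. \<bar>a r - b r\<bar>) * Bd"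
      by (rule sum_distrib_right[symmetric])
    ultimately show ?thesis by simp
  qed
  also have "\<dots> \<le> Bd * (2 * sqrt 2 / sqrt (real L + 1))"
    using beta_bound[of L] Bd0 by (rule mult_left_mono)
  finally show ?thesis .
qed


declare plus_fun_apply[simp del]

definition beta :: "nat \<Rightarrow> real" where "beta n = 2 * sqrt 2 / sqrt (real n + 1)"

lemma Tw_Sm_comm: "Tw q W (Sm c d \<Psi>) = Sm c d (Tw q W \<Psi>)"
  unfolding Tw_def Sm_def fun_eq_iff
  by (simp add: sum.distrib sum_divide_distrib[symmetric] algebra_simps add_ac)

lemma Tw_Sop_comm: "Tw q W (((Sm c d) ^^ L) \<Psi>) = ((Sm c d) ^^ L) (Tw q W \<Psi>)"
  by (induction L) (simp_all add: Tw_Sm_comm)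

lemma Tw_bound:
  assumes "\<And>y. y \<in> {1..q} \<Longrightarrow> W y \<ge> 0" "\<And>w. \<bar>\<Phi> w\<bar> \<le> Bd"
  shows "\<bar>Tw q W \<Phi> w\<bar> \<le> (\<Sum>y\<in>{1..q}. W y) * Bd"
proof -
  have "\<bar>Tw q W \<Phi> w\<bar> \<le> (\<Sum>y\<in>{1..q}. \<bar>W y * \<Phi> (w + ev y)\<bar>)"
    unfolding Tw_def by (rule sum_abs)
  also have "\<dots> \<le> (\<Sum>y\<in>{1..q}. W y * Bd)"
    using assms by (intro sum_mono) (simp add: abs_mult mult_left_mono)
  finally show ?thesis by (simp add: sum_distrib_right)
qed

lemma sum_ind:
  assumes "c \<in> A" "finite A"
  shows "(\<Sum>y\<in>A. (if y = c then 1 else 0) * (g y :: real)) = g c"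
proof -
  have "(\<Sum>y\<in>A. (if y = c then 1 else 0) * g y) = (\<Sum>y\<in>A. if y = c then g y else 0)"
    by (rule sum.cong) auto
  then show ?thesis using assms by simp
qed

lemma Tw_decomp:
  assumes "c \<in> {1..q}" "d \<in> {1..q}"
  shows "Tw q (\<lambda>y. U y x) \<Psi> w = 2 * \<epsilon> * Sm c d \<Psi> w +
    Tw q (\<lambda>y. U y x - \<epsilon> * ((if y = c then 1 else 0) + (if y = d then 1 else 0))) \<Psi> w"
proof -
  have "(\<Sum>y\<in>{1..q}. \<epsilon> * ((if y = c then 1 else 0) + (if y = d then 1 else 0)) * \<Psi> (w + ev y))
      = \<epsilon> * \<Psi> (w + ev c) + \<epsilon> * \<Psi> (w + ev d)"
    using assms sum_ind[of c "{1..q}" "\<lambda>y. \<Psi> (w + ev y)"] sum_ind[of d "{1..q}" "\<lambda>y. \<Psi> (w + ev y)"]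
    by (simp add: distrib_left distrib_right sum.distrib sum_distrib_left[symmetric] mult.assoc)
  then show ?thesis unfolding Tw_def Sm_def
    by (simp add: algebra_simps sum_subtractf)
qed

lemma abs_comb: "(t::real) \<ge> 0 \<Longrightarrow> \<bar>t * a1 + 1 * b1 - (t * a2 + 1 * b2)\<bar> \<le> t * \<bar>a1 - a2\<bar> + \<bar>b1 - b2\<bar>"
proof -
  assume t: "t \<ge> 0"
  have "\<bar>t * a1 + 1 * b1 - (t * a2 + 1 * b2)\<bar> = \<bar>t * (a1 - a2) + (b1 - b2)\<bar>" by (simp add: algebra_simps)
  also have "\<dots> \<le> \<bar>t * (a1 - a2)\<bar> + \<bar>b1 - b2\<bar>" by (rule abs_triangle_ineq)
  finally show ?thesis using t by (simp add: abs_mult)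
qed

lemma main_ind:
  fixes U :: "nat \<Rightarrow> nat \<Rightarrow> real" and \<epsilon> :: real
  assumes hU: "\<And>x y. x \<in> {1..q} \<Longrightarrow> y \<in> {1..q} \<Longrightarrow> 2 * \<epsilon> \<le> U y x"
    and hS: "\<And>x. x \<in> {1..q} \<Longrightarrow> (\<Sum>y\<in>{1..q}. U y x) = 1"
    and cd: "c \<in> {1..q}" "d \<in> {1..q}" and eps: "\<epsilon> \<ge> 0"
  shows "finite J \<Longrightarrow> (\<forall>i\<in>J. x i \<in> {1..q}) \<Longrightarrow> (\<And>w. \<bar>\<Phi> w\<bar> \<le> Bd) \<Longrightarrow>
    \<bar>EE U q J x (((Sm c d) ^^ L) \<Phi>) (u + ev c) - EE U q J x (((Sm c d) ^^ L) \<Phi>) (u + ev d)\<bar>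
      \<le> Bd * BS (2 * \<epsilon>) (card J) (\<lambda>k. beta (L + k))"
proof (induction J arbitrary: L \<Phi> Bd rule: finite_induct)
  case empty
  then show ?case using osc_bound[where \<Phi>=\<Phi> and Bd=Bd and c=c and d=d and L=L and u=u] by (simp add: EE_empty BS_0 beta_def)
next
  case (insert i J)
  define W where "W y = U y (x i) - \<epsilon> * ((if y = c then 1 else 0) + (if y = d then 1 else 0))" for y
  have xi: "x i \<in> {1..q}" using insert.prems by auto
  have W0: "W y \<ge> 0" if "y \<in> {1..q}" for y
    using hU[OF xi that] eps by (auto simp: W_def)
  have Wsum: "(\<Sum>y\<in>{1..q}. W y) = 1 - 2 * \<epsilon>"
    using hS[OF xi] cd by (simp add: W_def sum_subtractf sum.distrib sum_distrib_left[symmetric] sum.delta)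
  have Bd0: "Bd \<ge> 0" using insert.prems(2)[of 0] by linarith
  have TB: "\<bar>Tw q W \<Phi> w\<bar> \<le> (1 - 2 * \<epsilon>) * Bd" for w
    using Tw_bound[of q W \<Phi> Bd w, OF W0 insert.prems(2)] Wsum by simp
  have dec: "Tw q (\<lambda>y. U y (x i)) (((Sm c d) ^^ L) \<Phi>) =
      (\<lambda>w. (2 * \<epsilon>) * ((Sm c d) ^^ Suc L) \<Phi> w + 1 * ((Sm c d) ^^ L) (Tw q W \<Phi>) w)"
    unfolding fun_eq_iff using Tw_decomp[OF cd, of U "x i" "((Sm c d) ^^ L) \<Phi>"]
    by (simp add: W_def[abs_def] Tw_Sop_comm)
  have E: "EE U q (insert i J) x (((Sm c d) ^^ L) \<Phi>) v =
      (2 * \<epsilon>) * EE U q J x (((Sm c d) ^^ Suc L) \<Phi>) v + 1 * EE U q J x (((Sm c d) ^^ L) (Tw q W \<Phi>)) v" for v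
    unfolding EE_insert[OF insert.hyps] dec by (rule EE_lin)
  have J: "\<forall>i\<in>J. x i \<in> {1..q}" using insert.prems by auto
  have IH1: "\<bar>EE U q J x (((Sm c d) ^^ Suc L) \<Phi>) (u + ev c) - EE U q J x (((Sm c d) ^^ Suc L) \<Phi>) (u + ev d)\<bar>
      \<le> Bd * BS (2 * \<epsilon>) (card J) (\<lambda>k. beta (Suc L + k))"
    by (rule insert.IH[OF J insert.prems(2)])
  have IH2: "\<bar>EE U q J x (((Sm c d) ^^ L) (Tw q W \<Phi>)) (u + ev c) - EE U q J x (((Sm c d) ^^ L) (Tw q W \<Phi>)) (u + ev d)\<bar>
      \<le> ((1 - 2 * \<epsilon>) * Bd) * BS (2 * \<epsilon>) (card J) (\<lambda>k. beta (L + k))"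
    by (rule insert.IH[OF J TB])
  have "\<bar>EE U q (insert i J) x (((Sm c d) ^^ L) \<Phi>) (u + ev c) - EE U q (insert i J) x (((Sm c d) ^^ L) \<Phi>) (u + ev d)\<bar>
     \<le> (2 * \<epsilon>) * \<bar>EE U q J x (((Sm c d) ^^ Suc L) \<Phi>) (u + ev c) - EE U q J x (((Sm c d) ^^ Suc L) \<Phi>) (u + ev d)\<bar>
       + \<bar>EE U q J x (((Sm c d) ^^ L) (Tw q W \<Phi>)) (u + ev c) - EE U q J x (((Sm c d) ^^ L) (Tw q W \<Phi>)) (u + ev d)\<bar>"
    unfolding E by (rule abs_comb) (use eps in simp)
  also have "\<dots> \<le> (2 * \<epsilon>) * (Bd * BS (2 * \<epsilon>) (card J) (\<lambda>k. beta (Suc L + k))) +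
      ((1 - 2 * \<epsilon>) * Bd) * BS (2 * \<epsilon>) (card J) (\<lambda>k. beta (L + k))"
    using IH1 IH2 eps by (intro add_mono mult_left_mono) auto
  also have "\<dots> = Bd * BS (2 * \<epsilon>) (card (insert i J)) (\<lambda>k. beta (L + k))"
    using insert.hyps by (simp add: BS_Suc algebra_simps)
  finally show ?case .
qed


lemma gen_frac: "(p::real) > 0 \<Longrightarrow> E > 0 \<Longrightarrow> B / E * p ^ k * r = B * p ^ Suc k * r / (E * p)"
  by (simp add: field_split_simps)

lemma BS_inv:
  assumes "0 < p" "p \<le> 1"
  shows "BS p m (\<lambda>k. 1 / (real k + 1)) \<le> 1 / ((real m + 1) * p)"
proof -
  have key: "real (m choose k) / (real k + 1) = real (Suc m choose Suc k) / (real m + 1)" for k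
  proof -
    have "real (Suc m) * real (m choose k) = real (Suc m choose Suc k) * real (Suc k)"
      using Suc_times_binomial_eq[of m k] by (metis of_nat_mult)
    then show ?thesis by (simp add: field_split_simps)
  qed
  have "BS p m (\<lambda>k. 1 / (real k + 1)) = (\<Sum>k\<le>m. real (Suc m choose Suc k) * p ^ Suc k * (1 - p) ^ (Suc m - Suc k)) / ((real m + 1) * p)"
    unfolding BS_def sum_divide_distrib
  proof (intro sum.cong refl)
    fix k assume "k \<in> {..m}"
    have "real (m choose k) * p ^ k * (1 - p) ^ (m - k) * (1 / (real k + 1)) =
        (real (m choose k) / (real k + 1)) * p ^ k * (1 - p) ^ (m - k)" by simp
    also have "\<dots> = real (Suc m choose Suc k) / (real m + 1) * p ^ k * (1 - p) ^ (m - k)" by (simp only: key)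
    also have "\<dots> = real (Suc m choose Suc k) * p ^ Suc k * (1 - p) ^ (Suc m - Suc k) / ((real m + 1) * p)"
      using gen_frac[of p "real m + 1" "real (Suc m choose Suc k)" k "(1-p)^(m-k)"] assms by simp
    finally show "real (m choose k) * p ^ k * (1 - p) ^ (m - k) * (1 / (real k + 1)) =
        real (Suc m choose Suc k) * p ^ Suc k * (1 - p) ^ (Suc m - Suc k) / ((real m + 1) * p)" .
  qed
  also have "(\<Sum>k\<le>m. real (Suc m choose Suc k) * p ^ Suc k * (1 - p) ^ (Suc m - Suc k)) = 1 - (1 - p) ^ Suc m"
  proof -
    have "(p + (1 - p)) ^ Suc m = (\<Sum>k\<le>Suc m. real (Suc m choose k) * p ^ k * (1 - p) ^ (Suc m - k))"
      by (rule binomial_ring)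
    also have "\<dots> = (1 - p) ^ Suc m + (\<Sum>k\<le>m. real (Suc m choose Suc k) * p ^ Suc k * (1 - p) ^ (Suc m - Suc k))"
      by (subst sum.atMost_Suc_shift) simp
    finally show ?thesis by simp
  qed
  also have "(1 - (1 - p) ^ Suc m) / ((real m + 1) * p) \<le> 1 / ((real m + 1) * p)"
    using assms by (intro divide_right_mono) auto
  finally show ?thesis .
qed

lemma BS_beta:
  assumes "0 < p" "p \<le> 1"
  shows "BS p m beta \<le> 2 * sqrt 2 / sqrt ((real m + 1) * p)"
proof -
  define X where "X = (real m + 1) * p"
  have X0: "X > 0" using assms by (simp add: X_def)
  define \<alpha> where "\<alpha> = 1 / sqrt X"
  have a0: "\<alpha> > 0" using X0 by (simp add: \<alpha>_def)
  have amgm: "1 / sqrt (real k + 1) \<le> (\<alpha> / 2) * 1 + (1 / (2 * \<alpha>)) * (1 / (real k + 1))" for k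
  proof -
    define s where "s = 1 / sqrt (real k + 1)"
    have s2: "s^2 = 1 / (real k + 1)" by (simp add: s_def power_divide)
    have "0 \<le> (s - \<alpha>)^2" by simp
    then have "2 * \<alpha> * s \<le> s^2 + \<alpha>^2" by (simp add: power2_eq_square algebra_simps)
    then have "s \<le> (s^2 + \<alpha>^2) / (2 * \<alpha>)" using a0 by (simp add: field_simps)
    also have "\<dots> = (\<alpha> / 2) * 1 + (1 / (2 * \<alpha>)) * (1 / (real k + 1))"
    proof -
      have "\<alpha> * (real k + 1) > 0" using a0 by simp
      then show ?thesis unfolding s2 using a0 by (simp add: field_split_simps power2_eq_square)
    qed
    finally show ?thesis by (simp add: s_def)
  qed
  have "BS p m beta = 2 * sqrt 2 * BS p m (\<lambda>k. 1 / sqrt (real k + 1))"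
    unfolding BS_def beta_def sum_distrib_left by (simp add: algebra_simps)
  also have "BS p m (\<lambda>k. 1 / sqrt (real k + 1)) \<le> BS p m (\<lambda>k. (\<alpha> / 2) * 1 + (1 / (2 * \<alpha>)) * (1 / (real k + 1)))"
    using assms amgm by (intro BS_mono) auto
  also have "\<dots> = \<alpha> / 2 + (1 / (2 * \<alpha>)) * BS p m (\<lambda>k. 1 / (real k + 1))"
    using BS_lin[of p m "\<alpha> / 2" "\<lambda>_. 1" "1 / (2 * \<alpha>)" "\<lambda>k. 1 / (real k + 1)"] BS_one[of p m]
    by (simp only: mult_1_right)
  also have "\<dots> \<le> \<alpha> / 2 + (1 / (2 * \<alpha>)) * (1 / X)"
    using BS_inv[OF assms, of m] a0 unfolding X_def by (intro add_left_mono mult_left_mono) auto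
  also have "\<dots> = \<alpha>"
  proof -
    have "sqrt X * sqrt X = X" using X0 by simp
    then show ?thesis unfolding \<alpha>_def using X0 by (simp add: field_split_simps)
  qed
  finally have "BS p m beta \<le> 2 * sqrt 2 * \<alpha>" by simp
  then show ?thesis by (simp add: \<alpha>_def X_def)
qed


declare plus_fun_apply[simp del]

lemma finite_vecs: "finite (vecs q n)"
  by (simp add: vecs_def finite_PiE)

lemma card_fibers:
  assumes "finite S" "\<And>i. i \<in> S \<Longrightarrow> z i \<in> T" "finite T"
  shows "(\<Sum>c\<in>T. card {i\<in>S. z i = c}) = card S"
proof -
  have "(\<Sum>c\<in>T. card {i\<in>S. z i = c}) = (\<Sum>c\<in>T. \<Sum>i\<in>{i\<in>S. z i = c}. (1::nat))" by simp
  also have "\<dots> = (\<Sum>i\<in>S. (1::nat))"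
    by (rule sum.group) (use assms in auto)
  finally show ?thesis by simp
qed

lemma comp_in_comps:
  assumes "z \<in> vecs q n"
  shows "comp q n z \<in> comps q n"
proof -
  have "(\<Sum>c\<in>{1..q}. card {i\<in>{1..n}. z i = c}) = n"
    using card_fibers[of "{1..n}" z "{1..q}"] assms by (auto simp: vecs_def PiE_iff)
  then show ?thesis by (simp add: comps_def comp_def)
qed

lemma comp_eq_cnt:
  assumes "z \<in> vecs q n"
  shows "comp q n z = 0 + cnt {1..n} z"
proof
  fix c
  show "comp q n z c = (0 + cnt {1..n} z) c"
  proof (cases "c \<in> {1..q}")
    case False
    then have "{i\<in>{1..n}. z i = c} = {}" using assms by (auto simp: vecs_def PiE_iff)
    then show ?thesis using False by (simp add: comp_def cnt_def plus_fun_apply)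
  qed (simp add: comp_def cnt_def plus_fun_apply)
qed

lemma comp_cnt_eq:
  assumes "x \<in> vecs q n" "x' \<in> vecs q n" "comp q n x = comp q n x'"
  shows "card {i\<in>{1..n}. x i = c} = card {i\<in>{1..n}. x' i = c}"
  using comp_eq_cnt[OF assms(1)] comp_eq_cnt[OF assms(2)] assms(3)
  by (metis add_0 cnt_def)

lemma exists_vec:
  "t \<in> comps q n \<Longrightarrow> \<exists>x\<in>vecs q n. comp q n x = t"
proof (induction n arbitrary: t)
  case 0
  then have t0: "t c = 0" for c
    by (cases "c \<in> {1..q}") (auto simp: comps_def)
  have "(\<lambda>_. undefined) \<in> vecs q 0" by (simp add: vecs_def)
  moreover have "comp q 0 (\<lambda>_. undefined) = t" by (simp add: comp_def fun_eq_iff t0)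
  ultimately show ?case by blast
next
  case (Suc n)
  have tz: "\<forall>c. c \<notin> {1..q} \<longrightarrow> t c = 0" and ts: "(\<Sum>c\<in>{1..q}. t c) = Suc n"
    using Suc.prems by (auto simp: comps_def)
  have "\<exists>c0\<in>{1..q}. t c0 > 0"
  proof (rule ccontr)
    assume "\<not> ?thesis"
    then have "\<forall>c\<in>{1..q}. t c = 0" by auto
    then show False using ts by simp
  qed
  then obtain c0 where c0: "c0 \<in> {1..q}" "t c0 > 0" by blast
  define t0 where "t0 = t(c0 := t c0 - 1)"
  have "(\<Sum>c\<in>{1..q}. t0 c) = n"
  proof -
    have "(\<Sum>c\<in>{1..q}. t c) = t c0 + (\<Sum>c\<in>{1..q}-{c0}. t c)"
      using c0 by (simp add: sum.remove)
    moreover have "(\<Sum>c\<in>{1..q}. t0 c) = t0 c0 + (\<Sum>c\<in>{1..q}-{c0}. t0 c)"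
      using c0 by (simp add: sum.remove)
    moreover have "(\<Sum>c\<in>{1..q}-{c0}. t0 c) = (\<Sum>c\<in>{1..q}-{c0}. t c)"
      by (intro sum.cong) (auto simp: t0_def)
    ultimately show ?thesis using ts c0 by (simp add: t0_def)
  qed
  then have "t0 \<in> comps q n" using tz c0 by (auto simp: comps_def t0_def)
  then obtain x0 where x0: "x0 \<in> vecs q n" "comp q n x0 = t0" using Suc.IH by blast
  define x where "x = x0(Suc n := c0)"
  have "x \<in> vecs q (Suc n)"
    using x0(1) c0 by (auto simp: vecs_def x_def PiE_iff extensional_def)
  moreover have "comp q (Suc n) x = t"
  proof
    fix c
    have ins: "{1..Suc n} = insert (Suc n) {1..n}" by auto
    have "card {i\<in>{1..Suc n}. x i = c} = card {i\<in>{1..n}. x i = c} + (if x (Suc n) = c then 1 else 0)"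
      unfolding ins by (rule card_ins_cnt) auto
    also have "{i\<in>{1..n}. x i = c} = {i\<in>{1..n}. x0 i = c}" by (auto simp: x_def)
    finally have "card {i\<in>{1..Suc n}. x i = c} = card {i\<in>{1..n}. x0 i = c} + (if c0 = c then 1 else 0)"
      by (simp add: x_def)
    moreover have "comp q n x0 c = t0 c" using x0(2) by simp
    ultimately show "comp q (Suc n) x c = t c"
      using tz c0 by (cases "c \<in> {1..q}") (auto simp: comp_def t0_def split: if_splits)
  qed
  ultimately show ?case by blast
qed

lemma finite_comps: "finite (comps q n)"
proof -
  let ?F = "(\<lambda>f c. if c \<in> {1..q} then f c else 0) :: (nat \<Rightarrow> nat) \<Rightarrow> nat \<Rightarrow> nat"
  have "comps q n \<subseteq> ?F ` PiE {1..q} (\<lambda>_. {0..n})"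
  proof
    fix t assume t: "t \<in> comps q n"
    have "t c \<le> n" if "c \<in> {1..q}" for c
    proof -
      have "t c \<le> (\<Sum>c\<in>{1..q}. t c)" using that by (intro member_le_sum) auto
      then show ?thesis using t by (simp add: comps_def)
    qed
    then have "restrict t {1..q} \<in> PiE {1..q} (\<lambda>_. {0..n})" by auto
    moreover have "t = ?F (restrict t {1..q})" using t by (auto simp: comps_def fun_eq_iff)
    ultimately show "t \<in> ?F ` PiE {1..q} (\<lambda>_. {0..n})" by blast
  qed
  then show ?thesis by (rule finite_subset) (simp add: finite_PiE)
qed

lemma ncc_EE:
  assumes "x \<in> vecs q n" "comp q n x = t"
  shows "(\<Sum>w\<in>comps q n. \<sigma> w * ncc q n U w t) = EE U q {1..n} x \<sigma> 0"
proof -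
  define x0 where "x0 = (SOME x. x \<in> vecs q n \<and> comp q n x = t)"
  have x0: "x0 \<in> vecs q n" "comp q n x0 = t"
    using someI[of "\<lambda>x. x \<in> vecs q n \<and> comp q n x = t" x] assms unfolding x0_def by auto
  define \<mu> where "\<mu> z = (\<Prod>i\<in>{1..n}. U (z i) (x0 i))" for z
  have fin: "finite (comps q n)" by (rule finite_comps)
  have "(\<Sum>w\<in>comps q n. \<sigma> w * ncc q n U w t) = (\<Sum>w\<in>comps q n. \<Sum>z\<in>{z\<in>vecs q n. comp q n z = w}. \<mu> z * \<sigma> (comp q n z))"
    unfolding ncc_def Let_def x0_def[symmetric] \<mu>_def[symmetric] sum_distrib_left
    by (intro sum.cong refl) (simp add: mult.commute)
  also have "\<dots> = (\<Sum>z\<in>vecs q n. \<mu> z * \<sigma> (comp q n z))"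
    by (rule sum.group) (use fin finite_vecs comp_in_comps in auto)
  also have "\<dots> = EE U q {1..n} x0 \<sigma> 0"
    unfolding EE_def \<mu>_def vecs_def using comp_eq_cnt by (intro sum.cong refl) (simp add: vecs_def)
  also have "\<dots> = EE U q {1..n} x \<sigma> 0"
    by (rule EE_perm) (use comp_cnt_eq[OF x0(1) assms(1)] x0(2) assms(2) in auto)
  finally show ?thesis .
qed


declare plus_fun_apply[simp del]

definition Dn :: "nat \<Rightarrow> nat \<Rightarrow> (nat \<Rightarrow> nat \<Rightarrow> real) \<Rightarrow> (nat \<Rightarrow> nat) \<Rightarrow> (nat \<Rightarrow> nat) \<Rightarrow> real" where
  "Dn q n U t t' = (\<Sum>w\<in>comps q n. \<bar>ncc q n U w t - ncc q n U w t'\<bar>)"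

definition dd :: "nat \<Rightarrow> (nat \<Rightarrow> nat) \<Rightarrow> (nat \<Rightarrow> nat) \<Rightarrow> nat" where
  "dd q t t' = (\<Sum>c\<in>{1..q}. t c - t' c)"

lemma Dn_tri: "Dn q n U t t' \<le> Dn q n U t s + Dn q n U s t'"
  unfolding Dn_def sum.distrib[symmetric]
proof (intro sum_mono)
  fix w
  have "\<bar>ncc q n U w t - ncc q n U w t'\<bar> = \<bar>(ncc q n U w t - ncc q n U w s) + (ncc q n U w s - ncc q n U w t')\<bar>" by simp
  also have "\<dots> \<le> \<bar>ncc q n U w t - ncc q n U w s\<bar> + \<bar>ncc q n U w s - ncc q n U w t'\<bar>" by (rule abs_triangle_ineq)
  finally show "\<bar>ncc q n U w t - ncc q n U w t'\<bar> \<le> \<bar>ncc q n U w t - ncc q n U w s\<bar> + \<bar>ncc q n U w s - ncc q n U w t'\<bar>" .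
qed

lemma Dn_self: "Dn q n U t t = 0"
  by (simp add: Dn_def)

lemma EE_expand:
  assumes "finite J" "p0 \<notin> J" "\<And>i. i \<in> J \<Longrightarrow> x'' i = x i"
  shows "EE U q (insert p0 J) x'' \<Phi> 0 = (\<Sum>y\<in>{1..q}. U y (x'' p0) * EE U q J x \<Phi> (ev y))"
proof -
  have "EE U q (insert p0 J) x'' \<Phi> 0 = EE U q J x'' (\<lambda>w. \<Sum>y\<in>{1..q}. U y (x'' p0) * \<Phi> (w + ev y)) 0"
    using EE_insert[OF assms(1,2)] by (simp add: Tw_def[abs_def])
  also have "\<dots> = (\<Sum>y\<in>{1..q}. U y (x'' p0) * EE U q J x'' \<Phi> (0 + ev y))"
    by (simp add: EE_sum EE_cmult EE_shift)
  also have "\<dots> = (\<Sum>y\<in>{1..q}. U y (x'' p0) * EE U q J x \<Phi> (ev y))"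
    using EE_cong_x[of J x'' x] assms(3) by simp
  finally show ?thesis .
qed

lemma unit_EE:
  fixes U :: "nat \<Rightarrow> nat \<Rightarrow> real" and \<epsilon> :: real
  assumes hU: "\<And>x y. x \<in> {1..q} \<Longrightarrow> y \<in> {1..q} \<Longrightarrow> 2 * \<epsilon> \<le> U y x"
    and hS: "\<And>x. x \<in> {1..q} \<Longrightarrow> (\<Sum>y\<in>{1..q}. U y x) = 1"
    and eps: "\<epsilon> > 0" "2 * \<epsilon> \<le> 1"
    and x: "x \<in> vecs q n" and p0: "p0 \<in> {1..n}" and y0: "y0 \<in> {1..q}"
    and \<Phi>: "\<And>w. \<bar>\<Phi> w\<bar> \<le> 1"
  shows "\<bar>EE U q {1..n} x \<Phi> 0 - EE U q {1..n} (x(p0:=y0)) \<Phi> 0\<bar> \<le> 2 * (2 * sqrt 2 / sqrt (real n * (2 * \<epsilon>)))"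
proof -
  define J where "J = {1..n} - {p0}"
  have J: "finite J" "p0 \<notin> J" "{1..n} = insert p0 J" using p0 by (auto simp: J_def)
  have cJ: "real (card J) + 1 = real n" using p0 by (simp add: J_def)
  have xJ: "\<forall>i\<in>J. x i \<in> {1..q}" using x by (auto simp: J_def vecs_def PiE_iff)
  have k: "x p0 \<in> {1..q}" using x p0 by (auto simp: vecs_def PiE_iff)
  have q1: "1 \<in> {1..q}" using y0 by auto
  define G where "G y = EE U q J x \<Phi> (ev y)" for y
  define B where "B = 2 * sqrt 2 / sqrt (real n * (2 * \<epsilon>))"
  have e1: "EE U q {1..n} x \<Phi> 0 = (\<Sum>y\<in>{1..q}. U y (x p0) * G y)"
    unfolding J(3) G_def by (rule EE_expand[OF J(1,2)]) simp
  have e2: "EE U q {1..n} (x(p0:=y0)) \<Phi> 0 = (\<Sum>y\<in>{1..q}. U y y0 * G y)"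
  proof -
    have "\<And>i. i \<in> J \<Longrightarrow> (x(p0:=y0)) i = x i" using J(2) by auto
    from EE_expand[OF J(1,2), of "x(p0:=y0)" x, OF this] show ?thesis unfolding J(3) G_def by simp
  qed
  have GB: "\<bar>G y - G 1\<bar> \<le> B" if "y \<in> {1..q}" for y
  proof -
    have "\<bar>EE U q J x (((Sm y 1) ^^ 0) \<Phi>) (0 + ev y) - EE U q J x (((Sm y 1) ^^ 0) \<Phi>) (0 + ev 1)\<bar>
        \<le> 1 * BS (2 * \<epsilon>) (card J) (\<lambda>k. beta (0 + k))"
      by (rule main_ind[OF hU hS that q1 _ J(1) xJ \<Phi>]) (use eps in auto)
    also have "\<dots> \<le> 2 * sqrt 2 / sqrt ((real (card J) + 1) * (2 * \<epsilon>))"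
      using BS_beta[of "2 * \<epsilon>" "card J"] eps by simp
    finally show ?thesis by (simp add: G_def B_def cJ)
  qed
  have "EE U q {1..n} x \<Phi> 0 - EE U q {1..n} (x(p0:=y0)) \<Phi> 0 = (\<Sum>y\<in>{1..q}. (U y (x p0) - U y y0) * G y)"
    unfolding e1 e2 by (simp add: sum_subtractf left_diff_distrib)
  also have "\<dots> = (\<Sum>y\<in>{1..q}. (U y (x p0) - U y y0) * (G y - G 1))"
  proof -
    have "(\<Sum>y\<in>{1..q}. (U y (x p0) - U y y0) * G 1) = 0"
      using hS[OF k] hS[OF y0] by (simp add: sum_distrib_right[symmetric] sum_subtractf)
    then show ?thesis by (simp add: right_diff_distrib sum_subtractf)
  qed
  finally have "\<bar>EE U q {1..n} x \<Phi> 0 - EE U q {1..n} (x(p0:=y0)) \<Phi> 0\<bar> \<le> (\<Sum>y\<in>{1..q}. \<bar>(U y (x p0) - U y y0) * (G y - G 1)\<bar>)"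
    by (simp add: sum_abs)
  also have "\<dots> \<le> (\<Sum>y\<in>{1..q}. (U y (x p0) + U y y0) * B)"
  proof (intro sum_mono)
    fix y assume y: "y \<in> {1..q}"
    have u1: "U y (x p0) \<ge> 0" "U y y0 \<ge> 0" using hU[OF k y] hU[OF y0 y] eps by auto
    have "\<bar>U y (x p0) - U y y0\<bar> \<le> U y (x p0) + U y y0" using u1 by simp
    moreover have "\<bar>G y - G 1\<bar> \<le> B" using GB[OF y] .
    ultimately show "\<bar>(U y (x p0) - U y y0) * (G y - G 1)\<bar> \<le> (U y (x p0) + U y y0) * B"
      unfolding abs_mult by (intro mult_mono) auto
  qed
  also have "\<dots> = 2 * B" using hS[OF k] hS[OF y0] by (simp add: sum_distrib_right[symmetric] sum.distrib)
  finally show ?thesis by (simp add: B_def)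
qed


declare plus_fun_apply[simp del]

lemma upd_vec: "x \<in> vecs q n \<Longrightarrow> p0 \<in> {1..n} \<Longrightarrow> y0 \<in> {1..q} \<Longrightarrow> x(p0:=y0) \<in> vecs q n"
  by (auto simp: vecs_def PiE_iff extensional_def)

lemma D_unit:
  fixes U :: "nat \<Rightarrow> nat \<Rightarrow> real" and \<epsilon> :: real
  assumes hU: "\<And>x y. x \<in> {1..q} \<Longrightarrow> y \<in> {1..q} \<Longrightarrow> 2 * \<epsilon> \<le> U y x"
    and hS: "\<And>x. x \<in> {1..q} \<Longrightarrow> (\<Sum>y\<in>{1..q}. U y x) = 1"
    and eps: "\<epsilon> > 0" "2 * \<epsilon> \<le> 1"
    and x: "x \<in> vecs q n" and p0: "p0 \<in> {1..n}" and y0: "y0 \<in> {1..q}"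
  shows "Dn q n U (comp q n x) (comp q n (x(p0:=y0))) \<le> 2 * (2 * sqrt 2 / sqrt (real n * (2 * \<epsilon>)))"
proof -
  let ?t = "comp q n x" and ?t' = "comp q n (x(p0:=y0))"
  define \<sigma> where "\<sigma> w = sgn (ncc q n U w ?t - ncc q n U w ?t')" for w
  have \<sigma>: "\<bar>\<sigma> w\<bar> \<le> 1" for w by (simp add: \<sigma>_def sgn_if)
  have x': "x(p0:=y0) \<in> vecs q n" by (rule upd_vec[OF x p0 y0])
  have "Dn q n U ?t ?t' = (\<Sum>w\<in>comps q n. \<sigma> w * ncc q n U w ?t) - (\<Sum>w\<in>comps q n. \<sigma> w * ncc q n U w ?t')"
    unfolding Dn_def sum_subtractf[symmetric] right_diff_distrib[symmetric] \<sigma>_def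
    by (intro sum.cong refl) (simp add: sgn_if abs_if)
  also have "\<dots> = EE U q {1..n} x \<sigma> 0 - EE U q {1..n} (x(p0:=y0)) \<sigma> 0"
    using ncc_EE[OF x refl] ncc_EE[OF x' refl] by simp
  also have "\<dots> \<le> \<bar>EE U q {1..n} x \<sigma> 0 - EE U q {1..n} (x(p0:=y0)) \<sigma> 0\<bar>" by simp
  also have "\<dots> \<le> 2 * (2 * sqrt 2 / sqrt (real n * (2 * \<epsilon>)))"
    by (rule unit_EE[OF hU hS eps x p0 y0 \<sigma>])
  finally show ?thesis .
qed

lemma comps_zero: "t \<in> comps q n \<Longrightarrow> c \<notin> {1..q} \<Longrightarrow> t c = 0"
  by (simp add: comps_def)

lemma comps_sum: "t \<in> comps q n \<Longrightarrow> (\<Sum>c\<in>{1..q}. t c) = n"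
  by (simp add: comps_def)

lemma path:
  fixes U :: "nat \<Rightarrow> nat \<Rightarrow> real" and \<epsilon> :: real
  assumes hU: "\<And>x y. x \<in> {1..q} \<Longrightarrow> y \<in> {1..q} \<Longrightarrow> 2 * \<epsilon> \<le> U y x"
    and hS: "\<And>x. x \<in> {1..q} \<Longrightarrow> (\<Sum>y\<in>{1..q}. U y x) = 1"
    and eps: "\<epsilon> > 0" "2 * \<epsilon> \<le> 1"
    and t': "t' \<in> comps q n"
  shows "t \<in> comps q n \<Longrightarrow> Dn q n U t t' \<le> real (dd q t t') * (2 * (2 * sqrt 2 / sqrt (real n * (2 * \<epsilon>))))"
proof (induction "dd q t t'" arbitrary: t)
  case 0
  have le: "\<forall>c\<in>{1..q}. t c \<le> t' c"
    using 0(1)[symmetric] by (simp add: dd_def)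
  have "t = t'"
  proof
    fix c
    show "t c = t' c"
    proof (cases "c \<in> {1..q}")
      case True
      show ?thesis
      proof (rule ccontr)
        assume "t c \<noteq> t' c"
        then have "t c < t' c" using le True by force
        then have "(\<Sum>c\<in>{1..q}. t c) < (\<Sum>c\<in>{1..q}. t' c)"
          using le True by (intro sum_strict_mono_ex1) auto
        then show False using comps_sum[OF 0(2)] comps_sum[OF t'] by simp
      qed
    qed (simp add: comps_zero[OF 0(2)] comps_zero[OF t'])
  qed
  then show ?case using 0(1) by (simp add: Dn_self)
next
  case (Suc k)
  define K where "K = 2 * (2 * sqrt 2 / sqrt (real n * (2 * \<epsilon>)))"
  have "\<exists>kk\<in>{1..q}. t kk > t' kk"
  proof (rule ccontr)
    assume "\<not> ?thesis"
    then have "dd q t t' = 0" by (simp add: dd_def not_less)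
    then show False using Suc(2) by simp
  qed
  then obtain kk where kk: "kk \<in> {1..q}" "t kk > t' kk" by blast
  have "\<exists>jj\<in>{1..q}. t jj < t' jj"
  proof (rule ccontr)
    assume "\<not> ?thesis"
    then have "\<forall>c\<in>{1..q}. t' c \<le> t c" by auto
    then have "(\<Sum>c\<in>{1..q}. t' c) < (\<Sum>c\<in>{1..q}. t c)"
      using kk by (intro sum_strict_mono_ex1) auto
    then show False using comps_sum[OF Suc(3)] comps_sum[OF t'] by simp
  qed
  then obtain jj where jj: "jj \<in> {1..q}" "t jj < t' jj" by blast
  have kj: "kk \<noteq> jj" using kk jj by auto
  obtain x where x: "x \<in> vecs q n" "comp q n x = t" using exists_vec[OF Suc(3)] by blast
  have "card {i\<in>{1..n}. x i = kk} = t kk" using x(2) kk(1) by (auto simp: comp_def)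
  then have cne: "card {i\<in>{1..n}. x i = kk} \<noteq> 0" using kk(2) by linarith
  have "{i\<in>{1..n}. x i = kk} \<noteq> {}"
  proof
    assume e: "{i\<in>{1..n}. x i = kk} = {}"
    have "card {i\<in>{1..n}. x i = kk} = 0" unfolding e by (rule card.empty)
    with cne show False by contradiction
  qed
  then obtain p0 where p0: "p0 \<in> {1..n}" "x p0 = kk" by auto
  define x'' where "x'' = x(p0 := jj)"
  have x'': "x'' \<in> vecs q n" unfolding x''_def by (rule upd_vec[OF x(1) p0(1) jj(1)])
  define t'' where "t'' = comp q n x''"
  have t'': "t'' \<in> comps q n" unfolding t''_def by (rule comp_in_comps[OF x''])
  have rel: "t'' c + (if kk = c then 1 else 0) = t c + (if jj = c then 1 else 0)" if c: "c \<in> {1..q}" for c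
  proof -
    define J where "J = {1..n} - {p0}"
    have J: "finite J" "p0 \<notin> J" "{1..n} = insert p0 J" using p0 by (auto simp: J_def)
    have a: "card {i\<in>{1..n}. x'' i = c} = card {i\<in>J. x'' i = c} + (if x'' p0 = c then 1 else 0)"
      unfolding J(3) by (rule card_ins_cnt[OF J(1,2)])
    have b: "card {i\<in>{1..n}. x i = c} = card {i\<in>J. x i = c} + (if x p0 = c then 1 else 0)"
      unfolding J(3) by (rule card_ins_cnt[OF J(1,2)])
    have "{i\<in>J. x'' i = c} = {i\<in>J. x i = c}" using J(2) by (auto simp: x''_def)
    have x''p: "x'' p0 = jj" by (simp add: x''_def)
    have "t'' c = card {i\<in>J. x i = c} + (if jj = c then 1 else 0)"
      using a \<open>{i\<in>J. x'' i = c} = {i\<in>J. x i = c}\<close> c x''p by (simp add: t''_def comp_def)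
    moreover have "t c = card {i\<in>J. x i = c} + (if kk = c then 1 else 0)"
      using b c p0(2) x(2)[symmetric] by (simp add: comp_def)
    ultimately show ?thesis by simp
  qed
  have ddk: "dd q t'' t' = k"
  proof -
    have "t c - t' c = (t'' c - t' c) + (if c = kk then 1 else 0)" if c: "c \<in> {1..q}" for c
    proof -
      have r: "t'' c + (if kk = c then 1 else 0) = t c + (if jj = c then 1 else 0)" by (rule rel[OF c])
      consider "c = kk" | "c = jj" | "c \<noteq> kk" "c \<noteq> jj" by blast
      then show ?thesis
      proof cases
        case 1
        then have "t'' c + 1 = t c" using r kj by simp
        then show ?thesis using 1 kk(2) by simp
      next
        case 2
        then have "t'' c = t c + 1" using r kj by simp
        then show ?thesis using 2 jj(2) kj by simp
      next
        case 3
        then show ?thesis using r by simp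
      qed
    qed
    then have "dd q t t' = (\<Sum>c\<in>{1..q}. (t'' c - t' c) + (if c = kk then 1 else 0))"
      unfolding dd_def by (intro sum.cong) auto
    also have "\<dots> = dd q t'' t' + 1" using kk(1) by (simp add: sum.distrib dd_def)
    finally show ?thesis using Suc(2) by simp
  qed
  have A: "Dn q n U t t'' \<le> K"
    using D_unit[OF hU hS eps x(1) p0(1) jj(1)] x(2) unfolding t''_def x''_def K_def by simp
  have B: "Dn q n U t'' t' \<le> real k * K"
    using Suc(1)[OF ddk[symmetric] t''] unfolding K_def ddk .
  have fin: "Dn q n U t t' \<le> K + real k * K" using Dn_tri[of q n U t t' t''] A B by linarith
  have "real (dd q t t') * K = K + real k * K" using Suc(2)[symmetric] by (simp add: algebra_simps)
  then show ?case using fin unfolding K_def by linarith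
qed


declare plus_fun_apply[simp del]

definition lof :: "nat \<Rightarrow> nat \<Rightarrow> (nat \<Rightarrow> nat) \<Rightarrow> nat \<Rightarrow> nat" where
  "lof q a t = (\<lambda>i. if i \<in> {1..q-1} then t i div a + 1 else undefined)"

lemma comps_le: "t \<in> comps q n \<Longrightarrow> c \<in> {1..q} \<Longrightarrow> t c \<le> n"
  using member_le_sum[of c "{1..q}" t] by (simp add: comps_def)

lemma cell_coord:
  assumes "a \<ge> 1" "l i \<ge> 1"
  shows "((int (l i) - 1) * int a \<le> int (t i) \<and> int (t i) \<le> int (l i) * int a - 1) \<longleftrightarrow> l i = t i div a + 1"
proof -
  obtain m where m: "l i = Suc m" using assms(2) by (cases "l i") auto
  have e1: "(int (l i) - 1) * int a = int (m * a)" unfolding m by simp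
  have e2: "int (l i) * int a - 1 = int (Suc m * a) - 1" unfolding m by (simp add: algebra_simps)
  have "((int (l i) - 1) * int a \<le> int (t i) \<and> int (t i) \<le> int (l i) * int a - 1) \<longleftrightarrow> (m * a \<le> t i \<and> t i < Suc m * a)"
    unfolding e1 e2 by linarith
  also have "\<dots> \<longleftrightarrow> m = t i div a"
  proof
    assume h: "m * a \<le> t i \<and> t i < Suc m * a"
    have "t i div a = m" by (rule div_nat_eqI) (use h in \<open>simp_all add: mult.commute\<close>)
    then show "m = t i div a" by simp
  next
    assume h: "m = t i div a"
    have "t i div a * a \<le> t i" by (rule div_times_less_eq_dividend)
    moreover have "t i < a + t i div a * a" by (rule dividend_less_div_times) (use assms(1) in simp)
    ultimately show "m * a \<le> t i \<and> t i < Suc m * a" unfolding h by simp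
  qed
  finally show ?thesis using m by simp
qed

lemma nu_ge:
  assumes "a \<ge> 1" "k \<le> n"
  shows "k div a + 1 \<le> nu n a"
proof -
  have "real (k div a) \<le> real k / real a" by (rule of_nat_div_le_of_nat)
  also have "\<dots> < real (n + 1) / real a" using assms by (intro divide_strict_right_mono) auto
  also have "\<dots> \<le> real_of_int \<lceil>real (n + 1) / real a\<rceil>" by (rule le_of_int_ceiling)
  finally have "int (k div a) < \<lceil>real (n + 1) / real a\<rceil>" by linarith
  then show ?thesis unfolding nu_def by linarith
qed

lemma lof_props:
  assumes "a \<ge> 1" "t \<in> comps q n"
  shows "lof q a t \<in> Vset q n a" "t \<in> cell q n a (lof q a t)"
proof -
  have "lof q a t \<in> cellidx q n a"
    unfolding cellidx_def lof_def using nu_ge[OF assms(1) comps_le[OF assms(2)]]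
    by (auto simp: PiE_iff extensional_def)
  moreover have tc: "t \<in> cell q n a (lof q a t)"
  proof -
    have "\<forall>i\<in>{1..q-1}. (int (lof q a t i) - 1) * int a \<le> int (t i) \<and> int (t i) \<le> int (lof q a t i) * int a - 1"
    proof
      fix i assume i: "i \<in> {1..q-1}"
      have li: "lof q a t i = t i div a + 1" using i by (simp add: lof_def)
      show "(int (lof q a t i) - 1) * int a \<le> int (t i) \<and> int (t i) \<le> int (lof q a t i) * int a - 1"
        using cell_coord[OF assms(1), of "lof q a t" i t] li by simp
    qed
    then show ?thesis using assms(2) unfolding cell_def by blast
  qed
  ultimately show "lof q a t \<in> Vset q n a" "t \<in> cell q n a (lof q a t)"
    unfolding Vset_def by auto
qed

lemma cell_lof:
  assumes "a \<ge> 1" "l \<in> cellidx q n a" "t \<in> cell q n a l"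
  shows "l = lof q a t"
proof
  fix i
  show "l i = lof q a t i"
  proof (cases "i \<in> {1..q-1}")
    case True
    then have "l i \<ge> 1" using assms(2) by (auto simp: cellidx_def PiE_iff)
    moreover have "(int (l i) - 1) * int a \<le> int (t i) \<and> int (t i) \<le> int (l i) * int a - 1"
      using True assms(3) unfolding cell_def by blast
    ultimately have "l i = t i div a + 1" using cell_coord[OF assms(1), of l i t] by blast
    then show ?thesis using True by (simp add: lof_def)
  next
    case False
    then show ?thesis using assms(2) by (auto simp: cellidx_def PiE_iff extensional_def lof_def)
  qed
qed

lemma cell_sub: "cell q n a l \<subseteq> comps q n"
  by (auto simp: cell_def)

lemma finite_Vset: "finite (Vset q n a)"
proof -
  have "finite (cellidx q n a)" by (simp add: cellidx_def finite_PiE)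
  then show ?thesis by (rule finite_subset[rotated]) (auto simp: Vset_def)
qed

lemma cell_disj:
  assumes "a \<ge> 1" "l \<in> Vset q n a" "l' \<in> Vset q n a" "t \<in> cell q n a l" "t \<in> cell q n a l'"
  shows "l = l'"
  using cell_lof[OF assms(1) _ assms(4)] cell_lof[OF assms(1) _ assms(5)] assms(2,3)
  by (auto simp: Vset_def)

lemma sum_cells:
  assumes "a \<ge> 1"
  shows "(\<Sum>t\<in>comps q n. f t) = (\<Sum>l\<in>Vset q n a. \<Sum>t\<in>cell q n a l. f t)"
proof -
  have img: "lof q a ` comps q n \<subseteq> Vset q n a" using lof_props(1)[OF assms] by blast
  have "(\<Sum>l\<in>Vset q n a. \<Sum>t\<in>{t\<in>comps q n. lof q a t = l}. f t) = (\<Sum>t\<in>comps q n. f t)"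
    by (rule sum.group[OF finite_comps finite_Vset img])
  moreover have "{t\<in>comps q n. lof q a t = l} = cell q n a l" if l: "l \<in> Vset q n a" for l
  proof
    show "{t\<in>comps q n. lof q a t = l} \<subseteq> cell q n a l"
      using lof_props(2)[OF assms] by blast
    show "cell q n a l \<subseteq> {t\<in>comps q n. lof q a t = l}"
    proof
      fix t assume t: "t \<in> cell q n a l"
      have "l \<in> cellidx q n a" using l by (simp add: Vset_def)
      then have "l = lof q a t" by (rule cell_lof[OF assms _ t])
      then show "t \<in> {t\<in>comps q n. lof q a t = l}" using t cell_sub by blast
    qed
  qed
  ultimately show ?thesis by simp
qed


declare plus_fun_apply[simp del]

lemma dd_bound:
  assumes "q \<ge> 1" "t \<in> comps q n" "s \<in> comps q n"
  shows "real (dd q t s) \<le> (\<Sum>c\<in>{1..q-1}. \<bar>real (t c) - real (s c)\<bar>)"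
proof -
  define P where "P c = max 0 (real (t c) - real (s c))" for c
  define N where "N c = max 0 (real (s c) - real (t c))" for c
  have ins: "{1..q} = insert q {1..q-1}" using assms(1) by auto
  have qn: "q \<notin> {1..q-1}" by auto
  have "real (dd q t s) = (\<Sum>c\<in>{1..q}. P c)"
    unfolding dd_def P_def by (simp add: of_nat_diff_if) (intro sum.cong refl, simp add: of_nat_diff)
  also have "\<dots> = P q + (\<Sum>c\<in>{1..q-1}. P c)" unfolding ins using qn by simp
  also have "P q \<le> (\<Sum>c\<in>{1..q-1}. N c)"
  proof -
    have "(\<Sum>c\<in>{1..q}. real (t c)) = (\<Sum>c\<in>{1..q}. real (s c))"
      using comps_sum[OF assms(2)] comps_sum[OF assms(3)] by (simp flip: of_nat_sum)
    then have "real (t q) - real (s q) = (\<Sum>c\<in>{1..q-1}. real (s c) - real (t c))"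
      unfolding ins using qn by (simp add: sum_subtractf)
    also have "\<dots> \<le> (\<Sum>c\<in>{1..q-1}. N c)" by (intro sum_mono) (simp add: N_def)
    finally show ?thesis unfolding P_def using sum_nonneg[of "{1..q-1}" N] by (simp add: N_def)
  qed
  also have "(\<Sum>c\<in>{1..q-1}. N c) + (\<Sum>c\<in>{1..q-1}. P c) = (\<Sum>c\<in>{1..q-1}. \<bar>real (t c) - real (s c)\<bar>)"
    unfolding sum.distrib[symmetric] by (intro sum.cong refl) (simp add: N_def P_def)
  finally show ?thesis by simp
qed

lemma coord_close:
  assumes "a \<ge> 1" "i \<in> {1..q-1}" "t \<in> cell q n a l" "s \<in> cell q n a l'"
    and "\<bar>int (l i) - int (l' i)\<bar> \<le> \<delta>"
  shows "\<bar>real (t i) - real (s i)\<bar> \<le> real_of_int ((\<delta> + 1) * int a)"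
proof -
  have t: "(int (l i) - 1) * int a \<le> int (t i)" "int (t i) \<le> int (l i) * int a - 1"
    using assms(2,3) unfolding cell_def by blast+
  have s: "(int (l' i) - 1) * int a \<le> int (s i)" "int (s i) \<le> int (l' i) * int a - 1"
    using assms(2,4) unfolding cell_def by blast+
  have d1: "(int (l i) - int (l' i) + 1) * int a \<le> (\<delta> + 1) * int a"
    using assms(5) by (intro mult_right_mono) auto
  have d2: "(int (l' i) - int (l i) + 1) * int a \<le> (\<delta> + 1) * int a"
    using assms(5) by (intro mult_right_mono) auto
  have "int (t i) - int (s i) \<le> (int (l i) - int (l' i) + 1) * int a"
    using t(2) s(1) by (simp add: algebra_simps)
  moreover have "int (s i) - int (t i) \<le> (int (l' i) - int (l i) + 1) * int a"
    using s(2) t(1) by (simp add: algebra_simps)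
  ultimately have "\<bar>int (t i) - int (s i)\<bar> \<le> (\<delta> + 1) * int a" using d1 d2 by linarith
  then show ?thesis by linarith
qed

lemma dd_cells:
  assumes "q \<ge> 1" "a \<ge> 1" "t \<in> cell q n a l" "s \<in> cell q n a l'"
    and "\<And>i. i \<in> {1..q-1} \<Longrightarrow> \<bar>int (l i) - int (l' i)\<bar> \<le> \<delta>"
  shows "real (dd q t s) \<le> real (q - 1) * real_of_int ((\<delta> + 1) * int a)"
proof -
  have "real (dd q t s) \<le> (\<Sum>c\<in>{1..q-1}. \<bar>real (t c) - real (s c)\<bar>)"
    by (rule dd_bound[OF assms(1)]) (use assms(3,4) cell_sub in blast)+
  also have "\<dots> \<le> (\<Sum>c\<in>{1..q-1}. real_of_int ((\<delta> + 1) * int a))"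
    by (intro sum_mono coord_close[OF assms(2) _ assms(3,4) assms(5)])
  finally show ?thesis by simp
qed

lemma adjacent_close:
  assumes "adjacent q l l'" "i \<in> {1..q-1}"
  shows "\<bar>int (l i) - int (l' i)\<bar> \<le> 1"
  using assms unfolding adjacent_def by (elim conjE disjE bexE) (fastforce+)


declare plus_fun_apply[simp del]

lemma flr_le: "M > 0 \<Longrightarrow> flr M x \<le> x"
  unfolding flr_def by (simp add: divide_le_eq mult.commute)

lemma flr_gt: "M > 0 \<Longrightarrow> x - flr M x < 1 / real M"
proof -
  assume M: "M > 0"
  have "real M * x < real_of_int \<lfloor>real M * x\<rfloor> + 1" by linarith
  then have "x < (real_of_int \<lfloor>real M * x\<rfloor> + 1) / real M" using M by (simp add: field_simps)
  then show ?thesis unfolding flr_def using M by (simp add: add_divide_distrib)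
qed

lemma flr_nonneg: "M > 0 \<Longrightarrow> x \<ge> 0 \<Longrightarrow> flr M x \<ge> 0"
  unfolding flr_def by simp

lemma flr_mult: "\<exists>k::int. flr M x = real_of_int k / real M"
  unfolding flr_def by blast

lemma sum_mult_M:
  assumes "finite S" "\<And>s. s \<in> S \<Longrightarrow> \<exists>k::int. h s = real_of_int k / real M"
  shows "\<exists>k::int. (\<Sum>s\<in>S. h s) = real_of_int k / real M"
  using assms
proof (induction S rule: finite_induct)
  case empty
  then show ?case by (intro exI[of _ 0]) simp
next
  case (insert x S)
  obtain k1 where k1: "h x = real_of_int k1 / real M" using insert.prems by blast
  obtain k2 where k2: "(\<Sum>s\<in>S. h s) = real_of_int k2 / real M" using insert by blast
  show ?case using insert.hyps k1 k2 by (intro exI[of _ "k1 + k2"]) (simp add: add_divide_distrib)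
qed

lemma telescope:
  "(\<Sum>i\<in>{1..N}. (\<rho> i - \<rho> (i - 1)) * (F i :: real)) =
    (if N = 0 then 0 else \<rho> N * F N - \<rho> 0 * F 1) + (\<Sum>i\<in>{1..<N}. \<rho> i * (F i - F (Suc i)))"
proof (induction N)
  case 0
  then show ?case by simp
next
  case (Suc N)
  show ?case
  proof (cases "N = 0")
    case True
    then show ?thesis by (simp add: algebra_simps)
  next
    case False
    have "{1..Suc N} = insert (Suc N) {1..N}" by auto
    then have "(\<Sum>i\<in>{1..Suc N}. (\<rho> i - \<rho> (i - 1)) * F i) = (\<rho> (Suc N) - \<rho> N) * F (Suc N) + (\<Sum>i\<in>{1..N}. (\<rho> i - \<rho> (i - 1)) * F i)"
      by simp
    moreover have "{1..<Suc N} = insert N {1..<N}" using False by auto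
    then have "(\<Sum>i\<in>{1..<Suc N}. \<rho> i * (F i - F (Suc i))) = \<rho> N * (F N - F (Suc N)) + (\<Sum>i\<in>{1..<N}. \<rho> i * (F i - F (Suc i)))"
      by simp
    ultimately show ?thesis using Suc.IH False by (simp add: algebra_simps)
  qed
qed

locale qsetup =
  fixes q n a M :: nat and Qip :: "(nat \<Rightarrow> nat) \<Rightarrow> real" and rep :: "(nat \<Rightarrow> nat) \<Rightarrow> (nat \<Rightarrow> nat)"
    and g :: "nat \<Rightarrow> (nat \<Rightarrow> nat)"
  assumes q2: "q \<ge> 2" and a1: "a \<ge> 1" and M2: "M \<ge> 2"
    and dist: "is_dist q n Qip"
    and repc: "\<forall>l\<in>Vset q n a. rep l \<in> cell q n a l"
    and gray: "gray_like q n a g"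
begin

abbreviation "V \<equiv> Vset q n a"
abbreviation "N \<equiv> card (Vset q n a)"
definition "r t = Qip t - flr M (Qip t)"
abbreviation "Qa \<equiv> stageI q n a M Qip rep"
definition "R i = Rval Qa M rep g i"
definition "\<rho> i = R i - flr M (R i)"
abbreviation "RS \<equiv> (\<lambda>i. rep (g i)) ` {1..N}"

lemma M0: "M > 0" using M2 by simp

lemma r_nonneg: "t \<in> comps q n \<Longrightarrow> r t \<ge> 0"
  using flr_le[OF M0] by (simp add: r_def)

lemma r_le: "t \<in> comps q n \<Longrightarrow> r t \<le> Qip t"
  using flr_nonneg[OF M0] dist by (simp add: r_def is_dist_def)

lemma rep_comps: "l \<in> V \<Longrightarrow> rep l \<in> comps q n"
  using repc cell_sub by blast

lemma g_bij: "bij_betw g {1..N} V" using gray by (simp add: gray_like_def)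

lemma g_adj: "j \<in> {1..<N} \<Longrightarrow> adjacent q (g j) (g (Suc j))" using gray by (simp add: gray_like_def)

lemma g_in: "i \<in> {1..N} \<Longrightarrow> g i \<in> V" using g_bij by (auto simp: bij_betw_def)

lemma g_img: "g ` {1..N} = V" using g_bij by (simp add: bij_betw_def)

lemma rep_inj: "inj_on rep V"
proof
  fix l l' assume l: "l \<in> V" and l': "l' \<in> V" and e: "rep l = rep l'"
  show "l = l'" using cell_disj[OF a1 l l'] repc l l' e by metis
qed

lemma rg_inj: "inj_on (\<lambda>i. rep (g i)) {1..N}"
proof -
  have "inj_on (rep \<circ> g) {1..N}"
    by (rule comp_inj_on) (use g_bij rep_inj g_img in \<open>auto simp: bij_betw_def\<close>)
  then show ?thesis by (simp add: o_def)
qed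

lemma RS_eq: "RS = rep ` V"
proof -
  have "RS = rep ` (g ` {1..N})" by (simp add: image_image)
  then show ?thesis using g_img by simp
qed

lemma RS_sub: "RS \<subseteq> comps q n" using rep_comps RS_eq by auto

lemma stageI_id:
  "(\<Sum>t\<in>comps q n. (Qip t - Qa t) * f t) = (\<Sum>l\<in>V. \<Sum>t\<in>cell q n a l. r t * (f t - f (rep l)))"
proof -
  define X where "X l = (\<Sum>t'\<in>cell q n a l. r t')" for l
  have Qa: "Qa t = flr M (Qip t) + (\<Sum>l\<in>{l\<in>V. rep l = t}. X l)" for t
    by (simp add: stageI_def X_def r_def)
  have "(\<Sum>t\<in>comps q n. (Qip t - Qa t) * f t) = (\<Sum>t\<in>comps q n. r t * f t) - (\<Sum>t\<in>comps q n. \<Sum>l\<in>{l\<in>V. rep l = t}. X l * f (rep l))"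
  proof -
    have pt: "(Qip t - Qa t) * f t = r t * f t - (\<Sum>l\<in>{l\<in>V. rep l = t}. X l * f (rep l))" for t
    proof -
      have "(\<Sum>l\<in>{l\<in>V. rep l = t}. X l * f (rep l)) = (\<Sum>l\<in>{l\<in>V. rep l = t}. X l * f t)"
        by (intro sum.cong) auto
      also have "\<dots> = (\<Sum>l\<in>{l\<in>V. rep l = t}. X l) * f t" by (rule sum_distrib_right[symmetric])
      finally show ?thesis unfolding Qa r_def by (simp add: algebra_simps)
    qed
    show ?thesis by (simp only: pt sum_subtractf)
  qed
  also have "(\<Sum>t\<in>comps q n. \<Sum>l\<in>{l\<in>V. rep l = t}. X l * f (rep l)) = (\<Sum>l\<in>V. X l * f (rep l))"
    by (rule sum.group[OF finite_Vset finite_comps]) (use rep_comps in auto)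
  also have "(\<Sum>t\<in>comps q n. r t * f t) = (\<Sum>l\<in>V. \<Sum>t\<in>cell q n a l. r t * f t)"
    by (rule sum_cells[OF a1])
  also have "(\<Sum>l\<in>V. \<Sum>t\<in>cell q n a l. r t * f t) - (\<Sum>l\<in>V. X l * f (rep l)) =
      (\<Sum>l\<in>V. \<Sum>t\<in>cell q n a l. r t * (f t - f (rep l)))"
    by (simp add: X_def sum_subtractf[symmetric] sum_distrib_right right_diff_distrib)
  finally show ?thesis .
qed

lemma R1: "R 1 = Qa (rep (g 1))" by (simp add: R_def Rval_def)

lemma RSuc: "i \<ge> 1 \<Longrightarrow> R (Suc i) = Qa (rep (g (Suc i))) + \<rho> i"
proof -
  assume i: "i \<ge> 1"
  then obtain k where k: "i = Suc k" by (cases i) auto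
  show ?thesis unfolding \<rho>_def R_def Rval_def k by simp
qed

lemma quant_rep:
  assumes "i \<in> {1..N}"
  shows "quant q n a M Qip rep g (rep (g i)) = (if i < N then flr M (R i) else R i)"
proof -
  have ex: "\<exists>j\<in>{1..N}. rep (g j) = rep (g i)" using assms by blast
  have the: "(THE j. j \<in> {1..N} \<and> rep (g j) = rep (g i)) = i"
    using assms rg_inj by (intro the_equality) (auto dest: inj_onD)
  show ?thesis unfolding quant_def Let_def using ex the by (simp add: R_def)
qed

lemma quant_nonrep:
  assumes "t \<notin> RS"
  shows "quant q n a M Qip rep g t = Qa t"
  using assms unfolding quant_def Let_def by auto

lemma stageII_id:
  "(\<Sum>t\<in>comps q n. (Qa t - quant q n a M Qip rep g t) * f t) =
    (\<Sum>i\<in>{1..<N}. \<rho> i * (f (rep (g i)) - f (rep (g (Suc i)))))"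
proof -
  let ?Q = "quant q n a M Qip rep g"
  define \<rho>' where "\<rho>' i = (if 1 \<le> i \<and> i < N then \<rho> i else 0)" for i
  have "(\<Sum>t\<in>comps q n. (Qa t - ?Q t) * f t) = (\<Sum>t\<in>RS. (Qa t - ?Q t) * f t)"
    by (rule sum.mono_neutral_right[OF finite_comps RS_sub]) (auto simp: quant_nonrep)
  also have "\<dots> = (\<Sum>i\<in>{1..N}. (Qa (rep (g i)) - ?Q (rep (g i))) * f (rep (g i)))"
    using sum.reindex[OF rg_inj, of "\<lambda>t. (Qa t - ?Q t) * f t"] by (simp add: o_def)
  also have "\<dots> = (\<Sum>i\<in>{1..N}. (\<rho>' i - \<rho>' (i - 1)) * f (rep (g i)))"
  proof (intro sum.cong refl)
    fix i assume i: "i \<in> {1..N}"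
    have "Qa (rep (g i)) - ?Q (rep (g i)) = \<rho>' i - \<rho>' (i - 1)"
    proof (cases "i < N")
      case True
      show ?thesis
      proof (cases "i = 1")
        case True
        then show ?thesis using \<open>i < N\<close> quant_rep[OF i] R1 by (simp add: \<rho>'_def \<rho>_def)
      next
        case False
        then obtain k where k: "i = Suc k" "k \<ge> 1" using i by (cases i) auto
        then show ?thesis using \<open>i < N\<close> quant_rep[OF i] RSuc[OF k(2)] by (simp add: \<rho>'_def \<rho>_def)
      qed
    next
      case False
      then have iN: "i = N" using i by simp
      show ?thesis
      proof (cases "i = 1")
        case True
        then show ?thesis using iN quant_rep[OF i] R1 by (simp add: \<rho>'_def)
      next
        case False
        then obtain k where k: "i = Suc k" "k \<ge> 1" using i by (cases i) auto
        then show ?thesis using iN quant_rep[OF i] RSuc[OF k(2)] by (simp add: \<rho>'_def)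
      qed
    qed
    then show "(Qa (rep (g i)) - ?Q (rep (g i))) * f (rep (g i)) = (\<rho>' i - \<rho>' (i - 1)) * f (rep (g i))" by simp
  qed
  also have "\<dots> = (\<Sum>i\<in>{1..<N}. \<rho>' i * (f (rep (g i)) - f (rep (g (Suc i)))))"
    by (subst telescope) (simp add: \<rho>'_def)
  also have "\<dots> = (\<Sum>i\<in>{1..<N}. \<rho> i * (f (rep (g i)) - f (rep (g (Suc i)))))"
    by (intro sum.cong refl) (simp add: \<rho>'_def)
  finally show ?thesis .
qed

end


declare plus_fun_apply[simp del]

lemma half_comb:
  fixes d X Y A B :: real
  assumes "d \<le> 1/2 * (X + Y)" "X \<le> A" "Y \<le> B"
  shows "d \<le> 1/2 * A + 1/2 * B"
proof -
  have "X + Y \<le> A + B" using assms(2,3) by (rule add_mono)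
  then have "1/2 * (X + Y) \<le> 1/2 * (A + B)" by simp
  then show ?thesis using assms(1) by (simp add: distrib_left)
qed

lemma sum_abs_swap:
  fixes F :: "'a \<Rightarrow> 'b \<Rightarrow> real"
  assumes "finite I"
  shows "(\<Sum>w\<in>W. \<bar>\<Sum>k\<in>I. F k w\<bar>) \<le> (\<Sum>k\<in>I. \<Sum>w\<in>W. \<bar>F k w\<bar>)"
proof -
  have "(\<Sum>w\<in>W. \<bar>\<Sum>k\<in>I. F k w\<bar>) \<le> (\<Sum>w\<in>W. \<Sum>k\<in>I. \<bar>F k w\<bar>)"
    by (intro sum_mono sum_abs)
  also have "\<dots> = (\<Sum>k\<in>I. \<Sum>w\<in>W. \<bar>F k w\<bar>)" by (rule sum.swap)
  finally show ?thesis .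
qed

context qsetup
begin

lemma Qa_nonneg: "t \<in> comps q n \<Longrightarrow> Qa t \<ge> 0"
proof -
  assume t: "t \<in> comps q n"
  have "flr M (Qip t) \<ge> 0" using flr_nonneg[OF M0] dist t by (simp add: is_dist_def)
  moreover have "(\<Sum>l\<in>{l\<in>V. rep l = t}. \<Sum>t'\<in>cell q n a l. Qip t' - flr M (Qip t')) \<ge> 0"
    using r_nonneg cell_sub unfolding r_def by (intro sum_nonneg) blast
  ultimately show ?thesis by (simp add: stageI_def)
qed

lemma rho_bounds: "0 \<le> \<rho> i" "\<rho> i < 1 / real M"
  using flr_le[OF M0, of "R i"] flr_gt[OF M0, of "R i"] by (auto simp: \<rho>_def)

lemma R_nonneg: "1 \<le> i \<Longrightarrow> i \<le> N \<Longrightarrow> R i \<ge> 0"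
proof (induction i)
  case 0
  then show ?case by simp
next
  case (Suc k)
  show ?case
  proof (cases "k = 0")
    case True
    then show ?thesis using R1 Qa_nonneg rep_comps g_in Suc.prems by auto
  next
    case False
    then have "R (Suc k) = Qa (rep (g (Suc k))) + \<rho> k" using RSuc by simp
    moreover have "Qa (rep (g (Suc k))) \<ge> 0" using Qa_nonneg rep_comps g_in Suc.prems by auto
    ultimately show ?thesis using rho_bounds(1)[of k] by simp
  qed
qed

lemma quant_nonneg: "t \<in> comps q n \<Longrightarrow> quant q n a M Qip rep g t \<ge> 0"
proof -
  assume t: "t \<in> comps q n"
  show ?thesis
  proof (cases "t \<in> RS")
    case True
    then obtain i where i: "i \<in> {1..N}" "t = rep (g i)" by blast
    show ?thesis using quant_rep[OF i(1)] R_nonneg[of i] i flr_nonneg[OF M0] by auto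
  next
    case False
    then show ?thesis using quant_nonrep Qa_nonneg t by simp
  qed
qed

lemma sum_quant: "(\<Sum>t\<in>comps q n. quant q n a M Qip rep g t) = 1"
proof -
  have a: "(\<Sum>t\<in>comps q n. (Qip t - Qa t) * 1) = 0" using stageI_id[of "\<lambda>_. 1"] by simp
  have b: "(\<Sum>t\<in>comps q n. (Qa t - quant q n a M Qip rep g t) * 1) = 0" using stageII_id[of "\<lambda>_. 1"] by simp
  have "(\<Sum>t\<in>comps q n. Qip t) = 1" using dist by (simp add: is_dist_def)
  then show ?thesis using a b by (simp add: sum_subtractf)
qed

lemma quant_mult_aux:
  assumes "t \<in> comps q n" "N = 0 \<or> t \<noteq> rep (g N)"
  shows "\<exists>k::int. quant q n a M Qip rep g t = real_of_int k / real M"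
proof (cases "t \<in> RS")
  case True
  then obtain i where i: "i \<in> {1..N}" "t = rep (g i)" by blast
  then have "i < N" using assms(2) by (cases "i = N") auto
  then show ?thesis using quant_rep[OF i(1)] i flr_mult by simp
next
  case False
  then have E: "{l\<in>V. rep l = t} = {}" using RS_eq by auto
  have "Qa t = flr M (Qip t)" unfolding stageI_def E by simp
  then show ?thesis using quant_nonrep[OF False] flr_mult by simp
qed

lemma quant_mult:
  assumes "t \<in> comps q n"
  shows "\<exists>k::int. quant q n a M Qip rep g t = real_of_int k / real M"
proof (cases "N \<noteq> 0 \<and> t = rep (g N)")
  case False
  then have "N = 0 \<or> t \<noteq> rep (g N)" by blast
  then show ?thesis by (rule quant_mult_aux[OF assms])
next
  case True
  let ?Q = "quant q n a M Qip rep g"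
  have "\<exists>k::int. (\<Sum>s\<in>comps q n - {t}. ?Q s) = real_of_int k / real M"
    by (rule sum_mult_M) (use finite_comps True quant_mult_aux in auto)
  then obtain k where k: "(\<Sum>s\<in>comps q n - {t}. ?Q s) = real_of_int k / real M" by blast
  have "1 = ?Q t + (\<Sum>s\<in>comps q n - {t}. ?Q s)"
    using sum_quant sum.remove[OF finite_comps assms, of ?Q] by simp
  then have "?Q t = real_of_int (int M - k) / real M" using k M0 by (simp add: field_simps)
  then show ?thesis by blast
qed

lemma M_type_quant: "M_type q n M (quant q n a M Qip rep g)"
  unfolding M_type_def is_dist_def using quant_nonneg sum_quant quant_mult by auto

lemma N_le: "real N \<le> real (nu n a) ^ (q - 1)"
proof -
  have "N \<le> card (cellidx q n a)"
    by (rule card_mono) (auto simp: cellidx_def finite_PiE Vset_def)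
  also have "card (cellidx q n a) = nu n a ^ (q - 1)"
    by (simp add: cellidx_def card_PiE)
  finally show ?thesis by (simp flip: of_nat_power)
qed

lemma dtv_bound:
  fixes U :: "nat \<Rightarrow> nat \<Rightarrow> real" and \<epsilon> :: real
  assumes hU: "\<And>x y. x \<in> {1..q} \<Longrightarrow> y \<in> {1..q} \<Longrightarrow> 2 * \<epsilon> \<le> U y x"
    and hS: "\<And>x. x \<in> {1..q} \<Longrightarrow> (\<Sum>y\<in>{1..q}. U y x) = 1"
    and eps: "\<epsilon> > 0" "2 * \<epsilon> \<le> 1"
  defines "K \<equiv> 2 * (2 * sqrt 2 / sqrt (real n * (2 * \<epsilon>)))"
  shows "dTV q n (out_dist q n U Qip) (out_dist q n U (quant q n a M Qip rep g))
    \<le> (1/2) * (real (q - 1) * real a * K) + (1/2) * (real N * (1 / real M) * (real (q - 1) * (2 * real a) * K))"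
proof -
  let ?Q = "quant q n a M Qip rep g"
  let ?W = "comps q n"
  have K0: "K \<ge> 0" unfolding K_def using eps by simp
  have q1: "q \<ge> 1" using q2 by simp
  define S1 where "S1 w = (\<Sum>l\<in>V. \<Sum>t\<in>cell q n a l. r t * (ncc q n U w t - ncc q n U w (rep l)))" for w
  define S2 where "S2 w = (\<Sum>i\<in>{1..<N}. \<rho> i * (ncc q n U w (rep (g i)) - ncc q n U w (rep (g (Suc i)))))" for w
  have diff: "out_dist q n U Qip w - out_dist q n U ?Q w = S1 w + S2 w" for w
  proof -
    have "out_dist q n U Qip w - out_dist q n U ?Q w =
        (\<Sum>t\<in>?W. (Qip t - Qa t) * ncc q n U w t) + (\<Sum>t\<in>?W. (Qa t - ?Q t) * ncc q n U w t)"
      unfolding out_dist_def by (simp add: sum_subtractf[symmetric] sum.distrib[symmetric] algebra_simps)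
    then show ?thesis unfolding S1_def S2_def stageI_id stageII_id .
  qed
  have b1: "(\<Sum>w\<in>?W. \<bar>S1 w\<bar>) \<le> real (q - 1) * real a * K"
  proof -
    have "(\<Sum>w\<in>?W. \<bar>S1 w\<bar>) \<le> (\<Sum>l\<in>V. \<Sum>w\<in>?W. \<bar>\<Sum>t\<in>cell q n a l. r t * (ncc q n U w t - ncc q n U w (rep l))\<bar>)"
      unfolding S1_def by (rule sum_abs_swap[OF finite_Vset])
    also have "\<dots> \<le> (\<Sum>l\<in>V. \<Sum>t\<in>cell q n a l. \<Sum>w\<in>?W. \<bar>r t * (ncc q n U w t - ncc q n U w (rep l))\<bar>)"
      by (intro sum_mono sum_abs_swap finite_subset[OF cell_sub finite_comps])
    also have "\<dots> \<le> (\<Sum>l\<in>V. \<Sum>t\<in>cell q n a l. r t * (real (q - 1) * real a * K))"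
    proof (intro sum_mono)
      fix l t assume l: "l \<in> V" and t: "t \<in> cell q n a l"
      have tc: "t \<in> ?W" using t cell_sub by blast
      have rl: "rep l \<in> cell q n a l" using repc l by blast
      have "(\<Sum>w\<in>?W. \<bar>r t * (ncc q n U w t - ncc q n U w (rep l))\<bar>) = r t * Dn q n U t (rep l)"
        unfolding Dn_def using r_nonneg[OF tc] by (simp add: abs_mult sum_distrib_left)
      also have "Dn q n U t (rep l) \<le> real (dd q t (rep l)) * K"
        unfolding K_def by (rule path[OF hU hS eps rep_comps[OF l] tc])
      also have "real (dd q t (rep l)) \<le> real (q - 1) * real_of_int ((0 + 1) * int a)"
        by (rule dd_cells[OF q1 a1 t rl]) simp
      finally show "(\<Sum>w\<in>?W. \<bar>r t * (ncc q n U w t - ncc q n U w (rep l))\<bar>) \<le> r t * (real (q - 1) * real a * K)"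
        using r_nonneg[OF tc] K0 by (simp add: mult_left_mono mult_right_mono)
    qed
    also have "\<dots> = (\<Sum>t\<in>?W. r t) * (real (q - 1) * real a * K)"
      by (simp add: sum_cells[OF a1] sum_distrib_right)
    also have "\<dots> \<le> 1 * (real (q - 1) * real a * K)"
    proof (rule mult_right_mono)
      have "(\<Sum>t\<in>?W. r t) \<le> (\<Sum>t\<in>?W. Qip t)" by (intro sum_mono r_le)
      then show "(\<Sum>t\<in>?W. r t) \<le> 1" using dist by (simp add: is_dist_def)
    qed (use K0 in simp)
    finally show ?thesis by simp
  qed
  have b2: "(\<Sum>w\<in>?W. \<bar>S2 w\<bar>) \<le> real N * (1 / real M) * (real (q - 1) * (2 * real a) * K)"
  proof -
    have "(\<Sum>w\<in>?W. \<bar>S2 w\<bar>) \<le> (\<Sum>i\<in>{1..<N}. \<Sum>w\<in>?W. \<bar>\<rho> i * (ncc q n U w (rep (g i)) - ncc q n U w (rep (g (Suc i))))\<bar>)"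
      unfolding S2_def by (rule sum_abs_swap) simp
    also have "\<dots> \<le> (\<Sum>i\<in>{1..<N}. (1 / real M) * (real (q - 1) * (2 * real a) * K))"
    proof (intro sum_mono)
      fix i assume i: "i \<in> {1..<N}"
      have gi: "g i \<in> V" "g (Suc i) \<in> V" using g_in i by auto
      have r1: "rep (g i) \<in> cell q n a (g i)" "rep (g (Suc i)) \<in> cell q n a (g (Suc i))" using repc gi by auto
      have "(\<Sum>w\<in>?W. \<bar>\<rho> i * (ncc q n U w (rep (g i)) - ncc q n U w (rep (g (Suc i))))\<bar>) = \<rho> i * Dn q n U (rep (g i)) (rep (g (Suc i)))"
        unfolding Dn_def using rho_bounds(1)[of i] by (simp add: abs_mult sum_distrib_left)
      also have "Dn q n U (rep (g i)) (rep (g (Suc i))) \<le> real (dd q (rep (g i)) (rep (g (Suc i)))) * K"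
        unfolding K_def by (rule path[OF hU hS eps rep_comps[OF gi(2)] rep_comps[OF gi(1)]])
      also have "real (dd q (rep (g i)) (rep (g (Suc i)))) \<le> real (q - 1) * real_of_int ((1 + 1) * int a)"
        by (rule dd_cells[OF q1 a1 r1]) (rule adjacent_close[OF g_adj[OF i]])
      finally have "(\<Sum>w\<in>?W. \<bar>\<rho> i * (ncc q n U w (rep (g i)) - ncc q n U w (rep (g (Suc i))))\<bar>)
          \<le> \<rho> i * (real (q - 1) * (2 * real a) * K)"
        using rho_bounds(1)[of i] K0 by (simp add: mult_left_mono mult_right_mono)
      also have "\<dots> \<le> (1 / real M) * (real (q - 1) * (2 * real a) * K)"
        using rho_bounds(2)[of i] K0 by (intro mult_right_mono) auto
      finally show "(\<Sum>w\<in>?W. \<bar>\<rho> i * (ncc q n U w (rep (g i)) - ncc q n U w (rep (g (Suc i))))\<bar>)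
          \<le> (1 / real M) * (real (q - 1) * (2 * real a) * K)" .
    qed
    also have "\<dots> = real (N - 1) * ((1 / real M) * (real (q - 1) * (2 * real a) * K))" by simp
    also have "\<dots> \<le> real N * ((1 / real M) * (real (q - 1) * (2 * real a) * K))"
      using K0 by (intro mult_right_mono) auto
    finally show ?thesis by (simp add: mult.assoc)
  qed
  have "dTV q n (out_dist q n U Qip) (out_dist q n U ?Q) = (1/2) * (\<Sum>w\<in>?W. \<bar>S1 w + S2 w\<bar>)"
    unfolding dTV_def diff ..
  also have "\<dots> \<le> (1/2) * ((\<Sum>w\<in>?W. \<bar>S1 w\<bar>) + (\<Sum>w\<in>?W. \<bar>S2 w\<bar>))"
    by (simp add: sum.distrib[symmetric] sum_mono abs_triangle_ineq)
  finally have "dTV q n (out_dist q n U Qip) (out_dist q n U ?Q) \<le> (1/2) * ((\<Sum>w\<in>?W. \<bar>S1 w\<bar>) + (\<Sum>w\<in>?W. \<bar>S2 w\<bar>))" .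
  then show ?thesis using b1 b2 by (rule half_comb)
qed

end


declare plus_fun_apply[simp del]

lemma final_arith:
  fixes d K0 Lg sn a M Nn P Q1 :: real
  assumes K0: "K0 \<ge> 0" and Lg: "Lg \<ge> 1" and sn: "sn > 0" and a: "a \<ge> 1" and M: "M > 0"
    and NP: "Nn \<le> P" and N0: "Nn \<ge> 0" and Q1: "Q1 \<ge> 0"
    and d: "d \<le> 1/2 * (Q1 * a * (K0 / sn)) + 1/2 * (Nn * (1 / M) * (Q1 * (2 * a) * (K0 / sn)))"
  shows "d \<le> (Q1 * K0) * a * Lg / sn + P * ((Q1 * K0) * Lg / sn) * (a / M)"
proof -
  define Y where "Y = Q1 * a * (K0 / sn)"
  have Y0: "Y \<ge> 0" using K0 sn a Q1 by (simp add: Y_def)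
  define Z where "Z = Q1 * K0 * a / (sn * M)"
  have Z0: "Z \<ge> 0" using K0 sn a Q1 M by (simp add: Z_def)
  have t1: "1/2 * Y \<le> (Q1 * K0) * a * Lg / sn"
  proof -
    have "Y * 1 \<le> Y * Lg" by (rule mult_left_mono[OF Lg Y0])
    then have "1/2 * Y \<le> Y * Lg" using Y0 by linarith
    also have "Y * Lg = (Q1 * K0) * a * Lg / sn" by (simp add: Y_def field_simps)
    finally show ?thesis .
  qed
  have e2: "1/2 * (Nn * (1 / M) * (Q1 * (2 * a) * (K0 / sn))) = Nn * Z"
    using sn M by (simp add: Z_def field_simps)
  have "Nn * Z \<le> P * Z" using NP Z0 by (rule mult_right_mono)
  also have "P * Z \<le> (P * Z) * Lg"
  proof -
    have "P * Z \<ge> 0" using NP N0 Z0 by simp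
    from mult_left_mono[OF Lg this] show ?thesis by simp
  qed
  also have "(P * Z) * Lg = P * ((Q1 * K0) * Lg / sn) * (a / M)" by (simp add: Z_def field_simps)
  finally have t2: "1/2 * (Nn * (1 / M) * (Q1 * (2 * a) * (K0 / sn))) \<le> P * ((Q1 * K0) * Lg / sn) * (a / M)"
    using e2 by simp
  show ?thesis using d t1 t2 unfolding Y_def by linarith
qed

lemma nu_le:
  assumes "1 \<le> a" "a \<le> n"
  shows "real (nu n a) \<le> 2 * real n / real a"
proof -
  have ap: "real a > 0" using assms by simp
  have c: "real_of_int \<lceil>real (n + 1) / real a\<rceil> < real (n + 1) / real a + 1" by linarith
  then have "real_of_int \<lceil>real (n + 1) / real a\<rceil> * real a < real (n + 1) + real a"
    using ap by (simp add: field_simps)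
  then have "real_of_int (\<lceil>real (n + 1) / real a\<rceil> * int a) < real_of_int (int (n + 1) + int a)"
    by simp
  then have "\<lceil>real (n + 1) / real a\<rceil> * int a < int (n + 1) + int a"
    by (simp only: of_int_less_iff)
  then have i: "\<lceil>real (n + 1) / real a\<rceil> * int a \<le> int n + int a" by simp
  have cpos: "\<lceil>real (n + 1) / real a\<rceil> \<ge> 0"
  proof -
    have "real (n + 1) / real a \<le> real_of_int \<lceil>real (n + 1) / real a\<rceil>" by (rule le_of_int_ceiling)
    moreover have "real (n + 1) / real a \<ge> 0" by simp
    ultimately have "0 \<le> real_of_int \<lceil>real (n + 1) / real a\<rceil>" by linarith
    then show ?thesis by simp
  qed
  have "real (nu n a) = real_of_int \<lceil>real (n + 1) / real a\<rceil>" unfolding nu_def using cpos by simp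
  also have "\<dots> \<le> (real n + real a) / real a"
  proof -
    have "real_of_int (\<lceil>real (n + 1) / real a\<rceil> * int a) \<le> real_of_int (int n + int a)" using i by linarith
    then have "real_of_int \<lceil>real (n + 1) / real a\<rceil> * real a \<le> real n + real a" by simp
    then show ?thesis using ap by (simp add: field_simps)
  qed
  also have "\<dots> \<le> 2 * real n / real a" using assms ap by (intro divide_right_mono) auto
  finally show ?thesis .
qed

theorem proposition2:
  fixes q :: nat and U :: "nat \<Rightarrow> nat \<Rightarrow> real"
  assumes "q \<ge> 2"
    and "\<forall>x\<in>{1..q}. \<forall>y\<in>{1..q}. U y x > 0"
    and "\<forall>x\<in>{1..q}. (\<Sum>y\<in>{1..q}. U y x) = 1"
  shows "\<exists>C::real. \<exists>N0::nat. \<forall>n\<ge>N0. \<forall>M::nat. \<forall>a::nat.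
    \<forall>Qip rep g.
      M \<ge> 2 \<and> a \<in> {1..n} \<and> is_dist q n Qip \<and>
      (\<forall>l\<in>Vset q n a. rep l \<in> cell q n a l) \<and> gray_like q n a g \<longrightarrow>
      M_type q n M (quant q n a M Qip rep g) \<and>
      dTV q n (out_dist q n U Qip) (out_dist q n U (quant q n a M Qip rep g))
        \<le> C * real a * (log 2 (real n)) powr ((real q - 2) / 2) / sqrt (real n)
          + (2 * real n / real a) ^ (q - 1) * (C * (log 2 (real n)) powr ((real q - 2) / 2) / sqrt (real n))
            * (real a / real M)"
proof -
  define S where "S = (\<lambda>(x, y). U y x) ` ({1..q} \<times> {1..q})"
  have Sfin: "finite S" and Sne: "S \<noteq> {}" using assms(1) by (auto simp: S_def)
  define \<mu> where "\<mu> = Min S"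
  have mupos: "\<mu> > 0" unfolding \<mu>_def using Sfin Sne assms(2) by (auto simp: S_def)
  define \<epsilon> where "\<epsilon> = \<mu> / 2"
  have hU: "2 * \<epsilon> \<le> U y x" if "x \<in> {1..q}" "y \<in> {1..q}" for x y
  proof -
    have "U y x \<in> S" using that by (force simp: S_def)
    then show ?thesis unfolding \<epsilon>_def \<mu>_def using Sfin by simp
  qed
  have hS: "(\<Sum>y\<in>{1..q}. U y x) = 1" if "x \<in> {1..q}" for x using assms(3) that by blast
  have q1: "1 \<in> {1..q}" using assms(1) by simp
  have eps: "\<epsilon> > 0" "2 * \<epsilon> \<le> 1"
  proof -
    show "\<epsilon> > 0" using mupos by (simp add: \<epsilon>_def)
    have "U 1 1 \<le> (\<Sum>y\<in>{1..q}. U y 1)"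
      using assms(2) q1 by (intro member_le_sum) (auto intro: less_imp_le)
    then show "2 * \<epsilon> \<le> 1" using hU[OF q1 q1] hS[OF q1] by simp
  qed
  define K0 where "K0 = 4 * sqrt 2 / sqrt (2 * \<epsilon>)"
  have K0: "K0 \<ge> 0" using eps by (simp add: K0_def)
  define C where "C = real (q - 1) * K0"
  show ?thesis
  proof (intro exI[of _ C] exI[of _ 2] allI impI)
    fix n M a :: nat and Qip rep g
    assume n: "2 \<le> n"
    assume h: "M \<ge> 2 \<and> a \<in> {1..n} \<and> is_dist q n Qip \<and>
      (\<forall>l\<in>Vset q n a. rep l \<in> cell q n a l) \<and> gray_like q n a g"
    interpret qs: qsetup q n a M Qip rep g
      using h assms(1) by unfold_locales auto
    have Mt: "M_type q n M (quant q n a M Qip rep g)" by (rule qs.M_type_quant)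
    have dt: "dTV q n (out_dist q n U Qip) (out_dist q n U (quant q n a M Qip rep g))
      \<le> (1/2) * (real (q - 1) * real a * (2 * (2 * sqrt 2 / sqrt (real n * (2 * \<epsilon>)))))
        + (1/2) * (real (card (Vset q n a)) * (1 / real M) * (real (q - 1) * (2 * real a) * (2 * (2 * sqrt 2 / sqrt (real n * (2 * \<epsilon>))))))"
      by (rule qs.dtv_bound[OF hU hS eps])
    have Kn: "2 * (2 * sqrt 2 / sqrt (real n * (2 * \<epsilon>))) = K0 / sqrt (real n)"
      unfolding K0_def by (simp add: real_sqrt_mult)
    have Lg: "(log 2 (real n)) powr ((real q - 2) / 2) \<ge> 1"
    proof (rule ge_one_powr_ge_zero)
      have "log 2 (real n) \<ge> log 2 2" using n by (intro log_le_cancel_iff[THEN iffD2]) auto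
      then show "1 \<le> log 2 (real n)" by simp
      show "0 \<le> (real q - 2) / 2" using assms(1) by simp
    qed
    have a1: "a \<ge> 1" "a \<le> n" using h by auto
    have NP: "real (card (Vset q n a)) \<le> (2 * real n / real a) ^ (q - 1)"
    proof -
      have "real (card (Vset q n a)) \<le> real (nu n a) ^ (q - 1)" by (rule qs.N_le)
      also have "\<dots> \<le> (2 * real n / real a) ^ (q - 1)" by (intro power_mono nu_le a1) simp
      finally show ?thesis .
    qed
    have fin: "dTV q n (out_dist q n U Qip) (out_dist q n U (quant q n a M Qip rep g))
        \<le> (real (q - 1) * K0) * real a * (log 2 (real n)) powr ((real q - 2) / 2) / sqrt (real n)
          + (2 * real n / real a) ^ (q - 1) * ((real (q - 1) * K0) * (log 2 (real n)) powr ((real q - 2) / 2) / sqrt (real n)) * (real a / real M)"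
      by (rule final_arith[OF K0 Lg _ _ _ NP _ _ dt[unfolded Kn]]) (use a1 n h in auto)
    show "M_type q n M (quant q n a M Qip rep g) \<and>
      dTV q n (out_dist q n U Qip) (out_dist q n U (quant q n a M Qip rep g))
        \<le> C * real a * (log 2 (real n)) powr ((real q - 2) / 2) / sqrt (real n)
          + (2 * real n / real a) ^ (q - 1) * (C * (log 2 (real n)) powr ((real q - 2) / 2) / sqrt (real n))
            * (real a / real M)"
      using Mt fin unfolding C_def by simp
  qed
qed


end
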